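(* Let $\phi$ be an algebra automorphism of $\mathrm{DR}(\mathfrak{sl}_2)$ of the form $$h\mapsto f_1(h),\quad t\mapsto t\diamond f_2(h),\quad z_+\mapsto z_-\diamond f_3(h),\quad z_-\mapsto z_+\diamond f_4(h)$$ with $f_1,f_2,f_3,f_4\in\bar U(\mathfrak h)$. Then there exist $\beta\in\{1,-1\}$ and a function $\gamma(h)$ such that $$f_1(h)=-h-2,\quad f_2(h)=\beta\frac{h+2}{h},\quad f_3(h)=\frac{1}{(h-1)\gamma(h)},\quad f_4(h)=(h+3)\gamma(h+2).$$ Conversely, for every $\beta\in\{1,-1\}$ and every invertible element $\gamma(h)$ of $\bar U(\mathfrak h)$, these formulas define an automorphism of $\mathrm{DR}(\mathfrak{sl}_2)$.
   Context: Let $\mathfrak h=\mathbb C h$ and $\bar U(\mathfrak h)$ the localization of $\mathbb C[h]$ at the multiplicative set generated by $h+l$, $l\in\mathbb Z$. The diagonal reduction algebra $\mathrm{DR}(\mathfrak{sl}_2)$ is the associative algebra (with product $\diamond$) containing $\bar U(\mathfrak h)$, generated over it by $z_+,z_-,t$ subject to the weight relations $h\diamond z_\pm=z_\pm\diamond(h\pm2)$, $h\diamond t=t\diamond h$ and the relations $z_+\diamond t=t\diamond z_+\frac{h+4}{h+2}$, $\;z_+\diamond z_-=h-t\diamond t\frac1h+z_-\diamond z_+\frac{h(h+3)}{(h+1)(h+2)}$, $\;t\diamond z_-=z_-\diamond t\frac{h+2}{h}$ (elements of $\bar U(\mathfrak h)$ to the right are multiplied on the right). It is the subalgebra of the diagonal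 reduction algebra of $\mathfrak{gl}_2$ generated by $\bar U(\mathfrak h)$, $z_+=z_{12}$, $z_-=z_{21}$, $t=t_1-t_2$, with $h=h_1-h_2$. *)

theory Defs
  imports "HOL-Algebra.QuotRing" "HOL-Computational_Algebra.Polynomial_Factorial"
    "HOL-Computational_Algebra.Normalized_Fraction" "HOL-Computational_Algebra.Field_as_Ring"
begin

type_synonym rf = "complex poly fract"

definition hvar :: rf where "hvar = Fract [:0, 1:] 1"

definition cst :: "complex \<Rightarrow> rf" where "cst c = Fract [:c:] 1"

definition shift :: "int \<Rightarrow> rf \<Rightarrow> rf" where
  "shift k f = (case quot_of_fract f of (p, q) \<Rightarrow>
      Fract (pcompose p [:of_int k, 1:]) (pcompose q [:of_int k, 1:]))"

definition Ubar :: "rf set" where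
  "Ubar = {Fract p q | p q c ls. c \<noteq> 0 \<and>
             q = smult c (prod_list (map (\<lambda>l. [:of_int l, 1:]) ls))}"

datatype gen = Zp | Zm | T

fun gwt :: "gen \<Rightarrow> int" where
  "gwt Zp = 2" | "gwt Zm = -2" | "gwt T = 0"

definition wt :: "gen list \<Rightarrow> int" where "wt w = sum_list (map gwt w)"

text \<open>Free algebra over Ubar(h) on z_+, z_-, t with the weight relations built in:
  an element is a finitely supported map a from words to Ubar(h), standing for the
  sum of the w \<diamond> a(w) (coefficients on the right); f(h) \<diamond> w = w \<diamond> f(h + wt w).\<close>
definition fmult :: "(gen list \<Rightarrow> rf) \<Rightarrow> (gen list \<Rightarrow> rf) \<Rightarrow> (gen list \<Rightarrow> rf)" where
  "fmult a b = (\<lambda>w. \<Sum>i\<in>{0..length w}.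
      shift (wt (drop i w)) (a (take i w)) * b (drop i w))"

definition FA :: "(gen list \<Rightarrow> rf) ring" where
  "FA = \<lparr>carrier = {a. finite {w. a w \<noteq> 0} \<and> (\<forall>w. a w \<in> Ubar)},
         monoid.mult = fmult,
         monoid.one = (\<lambda>w. if w = [] then 1 else 0),
         ring.zero = (\<lambda>w. 0),
         ring.add = (\<lambda>a b w. a w + b w)\<rparr>"

definition mono :: "gen list \<Rightarrow> rf \<Rightarrow> (gen list \<Rightarrow> rf)" where
  "mono w f = (\<lambda>v. if v = w then f else 0)"

definition rels :: "(gen list \<Rightarrow> rf) set" where
  "rels = {
     (\<lambda>v. mono [Zp, T] 1 v - mono [T, Zp] ((hvar + 4) / (hvar + 2)) v),
     (\<lambda>v. mono [Zp, Zm] 1 v - mono [] hvar v + mono [T, T] (1 / hvar) v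
            - mono [Zm, Zp] (hvar * (hvar + 3) / ((hvar + 1) * (hvar + 2))) v),
     (\<lambda>v. mono [T, Zm] 1 v - mono [Zm, T] ((hvar + 2) / hvar) v)}"

definition DRideal :: "(gen list \<Rightarrow> rf) set" where
  "DRideal = genideal FA rels"

definition DR :: "(gen list \<Rightarrow> rf) set ring" where
  "DR = FA Quot DRideal"

definition cls :: "(gen list \<Rightarrow> rf) \<Rightarrow> (gen list \<Rightarrow> rf) set" where
  "cls x = DRideal +>\<^bsub>FA\<^esub> x"

text \<open>Algebra (i.e. C-linear ring) automorphisms of DR(sl_2).\<close>
definition DR_alg_aut :: "((gen list \<Rightarrow> rf) set \<Rightarrow> (gen list \<Rightarrow> rf) set) \<Rightarrow> bool" where
  "DR_alg_aut \<phi> \<longleftrightarrow> \<phi> \<in> ring_iso DR DR \<and>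
      (\<forall>c. \<phi> (cls (mono [] (cst c))) = cls (mono [] (cst c)))"

end

theory Submission
  imports Defs
begin


instance fract :: ("{idom,ring_char_0}") ring_char_0
proof
  show "inj (of_nat :: nat \<Rightarrow> 'a fract)"
  proof (rule injI)
    fix m n :: nat assume "(of_nat m :: 'a fract) = of_nat n"
    hence "Fract (of_nat m :: 'a) 1 = Fract (of_nat n) 1" by (simp add: of_nat_fract)
    thus "m = n" by (simp add: eq_fract)
  qed
qed

instance fract :: ("{idom,ring_char_0}") field_char_0 ..

lemma "(2::rf) \<noteq> 0" by simp



definition comp :: "complex poly \<Rightarrow> rf \<Rightarrow> rf" where
  "comp r f = (case quot_of_fract f of (p, q) \<Rightarrow> Fract (pcompose p r) (pcompose q r))"

lemma shift_comp: "shift k f = comp [:of_int k, 1:] f"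
  by (simp add: shift_def comp_def)

lemma comp_Fract:
  assumes r: "degree r > 0" and q: "q \<noteq> 0"
  shows "comp r (Fract p q) = Fract (pcompose p r) (pcompose q r)"
proof -
  obtain p' q' where pq: "quot_of_fract (Fract p q) = (p', q')" by (cases "quot_of_fract (Fract p q)")
  have q': "q' \<noteq> 0" using snd_quot_of_fract_nonzero[of "Fract p q"] pq by simp
  have "Fract p' q' = Fract p q" using Fract_quot_of_fract[of "Fract p q"] pq by simp
  hence e: "p' * q = p * q'" using q q' by (simp add: eq_fract)
  have nz1: "pcompose q' r \<noteq> 0" "pcompose q r \<noteq> 0" using q q' pcompose_eq_0[OF _ r] by auto
  have "pcompose p' r * pcompose q r = pcompose p r * pcompose q' r"
    using e by (metis pcompose_mult)
  thus ?thesis using nz1 by (simp add: comp_def pq eq_fract)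
qed

lemma comp_add: "degree r > 0 \<Longrightarrow> comp r (f + g) = comp r f + comp r g"
proof (induct f, induct g)
  fix a b c d :: "complex poly" assume "degree r > 0" "b \<noteq> 0" "d \<noteq> 0"
  thus "comp r (Fract c d + Fract a b) = comp r (Fract c d) + comp r (Fract a b)"
    by (simp add: comp_Fract pcompose_add pcompose_mult pcompose_eq_0_iff)
qed

lemma comp_mult: "degree r > 0 \<Longrightarrow> comp r (f * g) = comp r f * comp r g"
proof (induct f, induct g)
  fix a b c d :: "complex poly" assume "degree r > 0" "b \<noteq> 0" "d \<noteq> 0"
  thus "comp r (Fract c d * Fract a b) = comp r (Fract c d) * comp r (Fract a b)"
    by (simp add: comp_Fract pcompose_add pcompose_mult pcompose_eq_0_iff)
qed

lemma comp_uminus: "degree r > 0 \<Longrightarrow> comp r (- f) = - comp r f"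
proof (induct f)
  fix a b :: "complex poly" assume "degree r > 0" "b \<noteq> 0"
  thus "comp r (- Fract a b) = - comp r (Fract a b)"
    by (simp add: comp_Fract pcompose_uminus pcompose_eq_0_iff)
qed

lemma comp_diff: "degree r > 0 \<Longrightarrow> comp r (f - g) = comp r f - comp r g"
  using comp_add[of r f "-g"] comp_uminus[of r g] by simp

lemma comp_inverse: "degree r > 0 \<Longrightarrow> comp r (inverse f) = inverse (comp r f)"
proof (induct f)
  fix a b :: "complex poly" assume r: "degree r > 0" and b: "b \<noteq> 0"
  show "comp r (inverse (Fract a b)) = inverse (comp r (Fract a b))"
  proof (cases "a = 0")
    case True thus ?thesis using r b by (simp add: comp_Fract eq_fract(2) pcompose_1)
  next
    case False thus ?thesis using r b by (simp add: comp_Fract pcompose_eq_0_iff)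
  qed
qed

lemma comp_divide: "degree r > 0 \<Longrightarrow> comp r (f / g) = comp r f / comp r g"
  by (simp add: divide_inverse comp_mult comp_inverse)

lemma comp_poly: "degree r > 0 \<Longrightarrow> comp r (Fract p 1) = Fract (pcompose p r) 1"
  by (simp add: comp_Fract pcompose_1)

lemma comp_0: "degree r > 0 \<Longrightarrow> comp r 0 = 0"
  using comp_poly[of r 0] by (simp add: Zero_fract_def)

lemma comp_1: "degree r > 0 \<Longrightarrow> comp r 1 = 1"
  using comp_poly[of r 1] by (simp add: One_fract_def pcompose_1)

lemma comp_comp: "degree r > 0 \<Longrightarrow> degree s > 0 \<Longrightarrow> comp s (comp r f) = comp (pcompose r s) f"
proof (induct f)
  fix a b :: "complex poly" assume r: "degree r > 0" and s: "degree s > 0" and b: "b \<noteq> 0"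
  have "degree (pcompose r s) > 0" using r s by (simp add: degree_pcompose)
  thus "comp s (comp r (Fract a b)) = comp (pcompose r s) (Fract a b)"
    using r s b by (simp add: comp_Fract pcompose_eq_0_iff pcompose_assoc)
qed

lemma comp_id: "comp [:0,1:] f = f"
  by (induct f) (simp add: comp_Fract)



abbreviation P :: "complex poly \<Rightarrow> rf" where "P p \<equiv> Fract p 1"

lemma P_add: "P p + P q = P (p + q)" by simp
lemma P_mult: "P p * P q = P (p * q)" by simp
lemma P_uminus: "- P p = P (- p)" by simp
lemma P_diff: "P p - P q = P (p - q)" by simp
lemma P_eq_iff: "P p = P q \<longleftrightarrow> p = q" by (simp add: eq_fract)
lemma P_0: "P 0 = 0" by (simp add: Zero_fract_def)
lemma P_1: "P 1 = 1" by (simp add: One_fract_def)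
lemma P_of_nat: "P (of_nat n) = of_nat n" by (simp add: Fract_of_nat_eq)
lemma P_numeral: "P (numeral n) = numeral n" using P_of_nat[of "numeral n"] by simp
lemma P_of_int: "P (of_int k) = of_int k"
proof (cases "k \<ge> 0")
  case True then obtain n where "k = int n" by (metis nonneg_int_cases)
  thus ?thesis by (simp add: P_of_nat)
next
  case False then obtain n where "k = - int n" by (metis neg_int_cases less_le not_le)
  thus ?thesis by (simp add: P_of_nat P_uminus[symmetric])
qed

lemma hvar_plus_int: "hvar + of_int k = P [:of_int k, 1:]"
proof -
  have "[:of_int k, 1:] = [:0,1:] + (of_int k :: complex poly)" by (simp add: of_int_poly)
  thus ?thesis by (simp add: hvar_def P_of_int[symmetric])
qed

lemma hvar_plus_int_nz: "hvar + of_int k \<noteq> 0"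
  by (simp add: hvar_plus_int eq_fract(1)[of 1 1, where c=0, simplified] flip: P_0)

lemma hvar_nz: "hvar \<noteq> 0" using hvar_plus_int_nz[of 0] by simp
lemma hvar_plus_num_nz: "hvar + numeral n \<noteq> 0" using hvar_plus_int_nz[of "numeral n"] by simp
lemma hvar_minus_num_nz: "hvar - numeral n \<noteq> 0" using hvar_plus_int_nz[of "- numeral n"] by simp

lemma hvar_not_const: "hvar \<noteq> of_int k" using hvar_plus_int_nz[of "-k"] by simp
lemma hvar_not_num: "hvar \<noteq> numeral n" using hvar_not_const[of "numeral n"] by simp
lemma hvar_not_neg_num: "hvar \<noteq> - numeral n" using hvar_not_const[of "- numeral n"] by simp

lemma comp_P: "degree r > 0 \<Longrightarrow> comp r (P p) = P (pcompose p r)" by (rule comp_poly)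

lemma comp_of_int: "degree r > 0 \<Longrightarrow> comp r (of_int k) = of_int k"
  by (metis P_of_int comp_poly pcompose_const of_int_poly)
lemma comp_numeral: "degree r > 0 \<Longrightarrow> comp r (numeral n) = numeral n"
  using comp_of_int[of r "numeral n"] by simp
lemma comp_hvar: "degree r > 0 \<Longrightarrow> comp r hvar = P r"
  by (simp add: hvar_def comp_poly pcompose_pCons)
lemma comp_cst: "degree r > 0 \<Longrightarrow> comp r (cst c) = cst c"
  by (simp add: cst_def comp_poly)

lemmas comp_simps = comp_add comp_mult comp_uminus comp_diff comp_inverse comp_divide
  comp_of_int comp_numeral comp_hvar comp_cst comp_0 comp_1

lemma shift_add: "shift k (f + g) = shift k f + shift k g" by (simp add: shift_comp comp_add)
lemma shift_mult: "shift k (f * g) = shift k f * shift k g" by (simp add: shift_comp comp_mult)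
lemma shift_uminus: "shift k (- f) = - shift k f" by (simp add: shift_comp comp_uminus)
lemma shift_diff: "shift k (f - g) = shift k f - shift k g" by (simp add: shift_comp comp_diff)
lemma shift_inverse: "shift k (inverse f) = inverse (shift k f)" by (simp add: shift_comp comp_inverse)
lemma shift_divide: "shift k (f / g) = shift k f / shift k g" by (simp add: shift_comp comp_divide)
lemma shift_0: "shift k 0 = 0" by (simp add: shift_comp comp_0)
lemma shift_1: "shift k 1 = 1" by (simp add: shift_comp comp_1)
lemma shift_numeral: "shift k (numeral n) = numeral n" by (simp add: shift_comp comp_numeral)
lemma shift_of_int: "shift k (of_int n) = of_int n" by (simp add: shift_comp comp_of_int)
lemma shift_cst: "shift k (cst c) = cst c" by (simp add: shift_comp comp_cst)
lemma shift_hvar: "shift k hvar = hvar + of_int k"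
  by (simp add: shift_comp comp_hvar hvar_plus_int)
lemma shift_shift: "shift j (shift k f) = shift (j + k) f"
  by (simp add: shift_comp comp_comp pcompose_pCons algebra_simps)
lemma shift_zero[simp]: "shift 0 f = f" by (simp add: shift_comp comp_id)
lemma shift_inj: "shift k f = shift k g \<longleftrightarrow> f = g"
  by (metis shift_shift shift_zero add.commute add.right_inverse)
lemma shift_eq_0: "shift k f = 0 \<longleftrightarrow> f = 0" using shift_inj[of k f 0] by (simp add: shift_0)

lemmas shift_simps = shift_add shift_mult shift_uminus shift_diff shift_inverse shift_divide
  shift_0 shift_1 shift_numeral shift_of_int shift_cst shift_hvar shift_shift

definition sig :: "rf \<Rightarrow> rf" where "sig f = comp [:-2, -1:] f"

lemma sig_add: "sig (f + g) = sig f + sig g" by (simp add: sig_def comp_add)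
lemma sig_mult: "sig (f * g) = sig f * sig g" by (simp add: sig_def comp_mult)
lemma sig_uminus: "sig (- f) = - sig f" by (simp add: sig_def comp_uminus)
lemma sig_diff: "sig (f - g) = sig f - sig g" by (simp add: sig_def comp_diff)
lemma sig_inverse: "sig (inverse f) = inverse (sig f)" by (simp add: sig_def comp_inverse)
lemma sig_divide: "sig (f / g) = sig f / sig g" by (simp add: sig_def comp_divide)
lemma sig_0: "sig 0 = 0" by (simp add: sig_def comp_0)
lemma sig_1: "sig 1 = 1" by (simp add: sig_def comp_1)
lemma sig_numeral: "sig (numeral n) = numeral n" by (simp add: sig_def comp_numeral)
lemma sig_of_int: "sig (of_int n) = of_int n" by (simp add: sig_def comp_of_int)
lemma sig_cst: "sig (cst c) = cst c" by (simp add: sig_def comp_cst)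
lemma sig_hvar: "sig hvar = - hvar - 2"
proof -
  have "P [:-2,-1:] = P (- [:0,1:] - 2)" by (simp add: numeral_poly)
  moreover have "sig hvar = P [:-2,-1:]" by (simp add: sig_def comp_hvar)
  ultimately show ?thesis by (simp add: hvar_def P_diff[symmetric] P_uminus[symmetric] P_numeral)
qed
lemma sig_sig: "sig (sig f) = f"
  by (simp add: sig_def comp_comp pcompose_pCons comp_id)
lemma sig_shift: "sig (shift k f) = shift (- k) (sig f)"
  by (simp add: sig_def shift_comp comp_comp pcompose_pCons algebra_simps)
lemma sig_eq_0: "sig f = 0 \<longleftrightarrow> f = 0" by (metis sig_sig sig_0)

lemmas sig_simps = sig_add sig_mult sig_uminus sig_diff sig_inverse sig_divide
  sig_0 sig_1 sig_numeral sig_of_int sig_cst sig_hvar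



definition lin :: "int \<Rightarrow> complex poly" where "lin l = [:of_int l, 1:]"
definition Q :: "int list \<Rightarrow> complex poly" where "Q ls = prod_list (map lin ls)"

lemma Q_nz: "Q ls \<noteq> 0"
  by (auto simp: Q_def lin_def prod_list_zero_iff)

lemma Q_append: "Q (xs @ ys) = Q xs * Q ys" by (simp add: Q_def)

lemma Ubar_iff: "x \<in> Ubar \<longleftrightarrow> (\<exists>p c ls. c \<noteq> 0 \<and> x = Fract p (smult c (Q ls)))"
proof -
  have l: "lin = (\<lambda>l. [:of_int l, 1:])" by (rule ext) (simp add: lin_def)
  show ?thesis unfolding Ubar_def Q_def l by blast
qed

lemma UbarI: "c \<noteq> 0 \<Longrightarrow> Fract p (smult c (Q ls)) \<in> Ubar"
  by (auto simp: Ubar_iff)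

lemma Ubar_add: assumes "x \<in> Ubar" "y \<in> Ubar" shows "x + y \<in> Ubar"
proof -
  obtain p1 c1 l1 p2 c2 l2 where a: "c1 \<noteq> 0" "x = Fract p1 (smult c1 (Q l1))"
    "c2 \<noteq> 0" "y = Fract p2 (smult c2 (Q l2))" using assms by (auto simp: Ubar_iff)
  have "x + y = Fract (p1 * smult c2 (Q l2) + p2 * smult c1 (Q l1)) (smult (c1 * c2) (Q (l1 @ l2)))"
    using a Q_nz by (simp add: Q_append mult_ac)
  thus ?thesis using a by (simp add: UbarI)
qed

lemma Ubar_mult: assumes "x \<in> Ubar" "y \<in> Ubar" shows "x * y \<in> Ubar"
proof -
  obtain p1 c1 l1 p2 c2 l2 where a: "c1 \<noteq> 0" "x = Fract p1 (smult c1 (Q l1))"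
    "c2 \<noteq> 0" "y = Fract p2 (smult c2 (Q l2))" using assms by (auto simp: Ubar_iff)
  have "x * y = Fract (p1 * p2) (smult (c1 * c2) (Q (l1 @ l2)))"
    using a Q_nz by (simp add: Q_append mult_ac)
  thus ?thesis using a by (simp add: UbarI)
qed

lemma Ubar_uminus: assumes "x \<in> Ubar" shows "- x \<in> Ubar"
  using assms by (auto simp: Ubar_iff) (metis minus_fract)

lemma Ubar_diff: "x \<in> Ubar \<Longrightarrow> y \<in> Ubar \<Longrightarrow> x - y \<in> Ubar"
  using Ubar_add[of x "-y"] Ubar_uminus[of y] by simp

lemma Ubar_P: "P p \<in> Ubar"
  using UbarI[of 1 p "[]"] by (simp add: Q_def one_pCons)

lemma Ubar_inv_lin: "inverse (hvar + of_int l) \<in> Ubar"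
  using UbarI[of 1 1 "[l]"] by (simp add: Q_def lin_def hvar_plus_int)

lemma Ubar_0: "0 \<in> Ubar" using Ubar_P[of 0] by (simp add: P_0)
lemma Ubar_1: "1 \<in> Ubar" using Ubar_P[of 1] by (simp add: P_1)
lemma Ubar_numeral: "numeral n \<in> Ubar" using Ubar_P[of "numeral n"] by (simp add: P_numeral)
lemma Ubar_of_int: "of_int n \<in> Ubar" using Ubar_P[of "of_int n"] by (simp add: P_of_int)
lemma Ubar_hvar: "hvar \<in> Ubar" by (simp add: hvar_def Ubar_P)
lemma Ubar_cst: "cst c \<in> Ubar" by (simp add: cst_def Ubar_P)
lemma Ubar_inv_hvar: "inverse hvar \<in> Ubar" using Ubar_inv_lin[of 0] by simp
lemma Ubar_inv_plus: "inverse (hvar + numeral n) \<in> Ubar" using Ubar_inv_lin[of "numeral n"] by simp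
lemma Ubar_inv_minus: "inverse (hvar - numeral n) \<in> Ubar" using Ubar_inv_lin[of "- numeral n"] by simp

lemma Q_shift: "pcompose (Q ls) [:of_int k, 1:] = Q (map (\<lambda>l. l + k) ls)"
proof (induct ls)
  case Nil thus ?case by (simp add: Q_def pcompose_1)
next
  case (Cons a ls)
  have "pcompose (lin a) [:of_int k, 1:] = lin (a + k)"
    by (simp add: lin_def pcompose_pCons)
  thus ?case using Cons by (simp add: Q_def pcompose_mult)
qed

lemma Q_sig: "pcompose (Q ls) [:-2, -1:] = smult ((-1) ^ length ls) (Q (map (\<lambda>l. 2 - l) ls))"
proof (induct ls)
  case Nil thus ?case by (simp add: Q_def pcompose_1)
next
  case (Cons a ls)
  have "pcompose (lin a) [:-2,-1:] = smult (-1) (lin (2 - a))"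
    by (simp add: lin_def pcompose_pCons)
  thus ?case using Cons by (simp add: Q_def pcompose_mult mult_ac)
qed

lemma Ubar_shift: assumes "x \<in> Ubar" shows "shift k x \<in> Ubar"
proof -
  obtain p c l where a: "c \<noteq> 0" "x = Fract p (smult c (Q l))" using assms by (auto simp: Ubar_iff)
  have "shift k x = Fract (pcompose p [:of_int k, 1:]) (smult c (Q (map (\<lambda>l. l + k) l)))"
    using a Q_nz by (simp add: shift_comp comp_Fract pcompose_smult Q_shift)
  thus ?thesis using a by (simp add: UbarI)
qed

lemma Ubar_sig: assumes "x \<in> Ubar" shows "sig x \<in> Ubar"
proof -
  obtain p c l where a: "c \<noteq> 0" "x = Fract p (smult c (Q l))" using assms by (auto simp: Ubar_iff)
  have "sig x = Fract (pcompose p [:-2, -1:]) (smult (c * (-1) ^ length l) (Q (map (\<lambda>l. 2 - l) l)))"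
    using a Q_nz by (simp add: sig_def comp_Fract pcompose_smult Q_sig)
  thus ?thesis using a by (simp add: UbarI)
qed



lemma wt_Nil[simp]: "wt [] = 0" by (simp add: wt_def)
lemma wt_Cons[simp]: "wt (g # w) = gwt g + wt w" by (simp add: wt_def)
lemma wt_append[simp]: "wt (u @ v) = wt u + wt v" by (simp add: wt_def)

lemma sum_Ubar: "finite A \<Longrightarrow> (\<And>x. x \<in> A \<Longrightarrow> f x \<in> Ubar) \<Longrightarrow> sum f A \<in> Ubar"
  by (induct A rule: finite_induct) (auto simp: Ubar_0 Ubar_add)

lemma carrier_FA: "a \<in> carrier FA \<longleftrightarrow> finite {w. a w \<noteq> 0} \<and> (\<forall>w. a w \<in> Ubar)"
  by (simp add: FA_def)
lemma mult_FA: "a \<otimes>\<^bsub>FA\<^esub> b = fmult a b" by (simp add: FA_def)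
lemma one_FA: "\<one>\<^bsub>FA\<^esub> = (\<lambda>w. if w = [] then 1 else 0)" by (simp add: FA_def)
lemma zero_FA: "\<zero>\<^bsub>FA\<^esub> = (\<lambda>w. 0)" by (simp add: FA_def)
lemma add_FA: "a \<oplus>\<^bsub>FA\<^esub> b = (\<lambda>w. a w + b w)" by (simp add: FA_def)

lemma sum_swap_tri:
  "(\<Sum>i\<in>{0..n::nat}. \<Sum>j\<in>{0..i}. F j i) = (\<Sum>j\<in>{0..n}. \<Sum>i\<in>{j..n}. F j i)"
proof (induct n)
  case 0 thus ?case by simp
next
  case (Suc n)
  have "(\<Sum>j\<in>{0..Suc n}. \<Sum>i\<in>{j..Suc n}. F j i)
      = (\<Sum>j\<in>{0..n}. \<Sum>i\<in>{j..Suc n}. F j i) + F (Suc n) (Suc n)" by simp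
  also have "(\<Sum>j\<in>{0..n}. \<Sum>i\<in>{j..Suc n}. F j i) = (\<Sum>j\<in>{0..n}. (\<Sum>i\<in>{j..n}. F j i) + F j (Suc n))"
    by (rule sum.cong) auto
  finally show ?case using Suc by (simp add: sum.distrib)
qed

lemma drop_split: "j \<le> i \<Longrightarrow> i \<le> length w \<Longrightarrow> drop j w = drop j (take i w) @ drop i w"
proof -
  assume a: "j \<le> i" "i \<le> length w"
  have "drop j w = drop j (take i w @ drop i w)" by (simp only: append_take_drop_id)
  also have "\<dots> = drop j (take i w) @ drop (j - length (take i w)) (drop i w)" by (rule drop_append)
  also have "\<dots> = drop j (take i w) @ drop i w" using a by simp
  finally show ?thesis .
qed



lemma shift_sum: "shift k (sum f A) = (\<Sum>x\<in>A. shift k (f x))"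
  by (induct A rule: infinite_finite_induct) (simp_all add: shift_0 shift_add)

lemma sum_reindex_from: "(\<Sum>k\<in>{0..n - j}. G (j + k)) = (\<Sum>i\<in>{j..n::nat}. G i)" if "j \<le> n"
proof -
  have "(\<Sum>i\<in>{j..n}. G i) = (\<Sum>i\<in>{0 + j..(n - j) + j}. G i)" using that by simp
  also have "\<dots> = (\<Sum>k\<in>{0..n - j}. G (k + j))" by (rule sum.shift_bounds_cl_nat_ivl)
  finally show ?thesis by (simp add: add.commute)
qed

lemma fmult_assoc: "fmult (fmult a b) c = fmult a (fmult b c)"
proof
  fix w :: "gen list"
  define n where "n = length w"
  define F where "F j i = shift (wt (drop j w)) (a (take j w)) * (shift (wt (drop i w)) (b (drop j (take i w))) * c (drop i w))" for j i
  have L: "fmult (fmult a b) c w = (\<Sum>i\<in>{0..n}. \<Sum>j\<in>{0..i}. F j i)"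
  proof -
    have "fmult (fmult a b) c w = (\<Sum>i\<in>{0..n}. shift (wt (drop i w)) (fmult a b (take i w)) * c (drop i w))"
      by (simp add: fmult_def n_def)
    also have "\<dots> = (\<Sum>i\<in>{0..n}. \<Sum>j\<in>{0..i}. F j i)"
    proof (rule sum.cong[OF refl])
      fix i assume i: "i \<in> {0..n}"
      have e1: "fmult a b (take i w) = (\<Sum>j\<in>{0..i}. shift (wt (drop j (take i w))) (a (take j (take i w))) * b (drop j (take i w)))"
        using i by (simp add: fmult_def n_def min_def)
      have "shift (wt (drop i w)) (fmult a b (take i w)) * c (drop i w)
         = (\<Sum>j\<in>{0..i}. shift (wt (drop i w)) (shift (wt (drop j (take i w))) (a (take j (take i w)))) * shift (wt (drop i w)) (b (drop j (take i w)))) * c (drop i w)"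
        unfolding e1 by (simp add: shift_sum shift_mult)
      also have "\<dots> = (\<Sum>j\<in>{0..i}. F j i)"
        unfolding sum_distrib_right
      proof (rule sum.cong[OF refl])
        fix j assume j: "j \<in> {0..i}"
        have "drop j w = drop j (take i w) @ drop i w" using i j by (intro drop_split) (auto simp: n_def)
        hence "wt (drop i w) + wt (drop j (take i w)) = wt (drop j w)" by simp
        moreover have "take j (take i w) = take j w" using j by (simp add: min_def)
        ultimately show "shift (wt (drop i w)) (shift (wt (drop j (take i w))) (a (take j (take i w)))) * shift (wt (drop i w)) (b (drop j (take i w))) * c (drop i w) = F j i"
          by (simp add: F_def shift_shift mult.assoc)
      qed
      finally show "shift (wt (drop i w)) (fmult a b (take i w)) * c (drop i w) = (\<Sum>j\<in>{0..i}. F j i)" .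
    qed
    finally show ?thesis .
  qed
  have R: "fmult a (fmult b c) w = (\<Sum>j\<in>{0..n}. \<Sum>i\<in>{j..n}. F j i)"
  proof -
    have "fmult a (fmult b c) w = (\<Sum>j\<in>{0..n}. shift (wt (drop j w)) (a (take j w)) * fmult b c (drop j w))"
      by (simp add: fmult_def n_def)
    also have "\<dots> = (\<Sum>j\<in>{0..n}. \<Sum>i\<in>{j..n}. F j i)"
    proof (rule sum.cong[OF refl])
      fix j assume j: "j \<in> {0..n}"
      have "fmult b c (drop j w) = (\<Sum>k\<in>{0..n - j}. shift (wt (drop k (drop j w))) (b (take k (drop j w))) * c (drop k (drop j w)))"
        by (simp add: fmult_def n_def)
      also have "\<dots> = (\<Sum>k\<in>{0..n - j}. shift (wt (drop (j + k) w)) (b (drop j (take (j + k) w))) * c (drop (j + k) w))"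
        by (simp add: drop_take add.commute)
      also have "\<dots> = (\<Sum>i\<in>{j..n}. shift (wt (drop i w)) (b (drop j (take i w))) * c (drop i w))"
        using j by (intro sum_reindex_from) simp
      finally show "shift (wt (drop j w)) (a (take j w)) * fmult b c (drop j w) = (\<Sum>i\<in>{j..n}. F j i)"
        by (simp add: F_def sum_distrib_left)
    qed
    finally show ?thesis .
  qed
  show "fmult (fmult a b) c w = fmult a (fmult b c) w" using L R sum_swap_tri[of F n] by simp
qed



lemma fmult_supp: "{w. fmult a b w \<noteq> 0} \<subseteq> (\<lambda>(u,v). u @ v) ` ({u. a u \<noteq> 0} \<times> {v. b v \<noteq> 0})"
proof
  fix w assume "w \<in> {w. fmult a b w \<noteq> 0}"
  hence "(\<Sum>i\<in>{0..length w}. shift (wt (drop i w)) (a (take i w)) * b (drop i w)) \<noteq> 0"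
    by (simp add: fmult_def)
  then obtain i where i: "shift (wt (drop i w)) (a (take i w)) * b (drop i w) \<noteq> 0"
    using sum.not_neutral_contains_not_neutral by blast
  hence "a (take i w) \<noteq> 0" "b (drop i w) \<noteq> 0" by (auto simp: shift_0)
  hence "(take i w, drop i w) \<in> {u. a u \<noteq> 0} \<times> {v. b v \<noteq> 0}" by simp
  moreover have "w = (\<lambda>(u,v). u @ v) (take i w, drop i w)" by simp
  ultimately show "w \<in> (\<lambda>(u,v). u @ v) ` ({u. a u \<noteq> 0} \<times> {v. b v \<noteq> 0})" by blast
qed
lemma fmult_carrier: assumes "a \<in> carrier FA" "b \<in> carrier FA" shows "fmult a b \<in> carrier FA"
proof -
  have "finite {w. fmult a b w \<noteq> 0}"
    using assms by (intro finite_subset[OF fmult_supp]) (auto simp: carrier_FA)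
  moreover have "fmult a b w \<in> Ubar" for w
    using assms unfolding fmult_def carrier_FA
    by (intro sum_Ubar) (auto intro!: Ubar_mult Ubar_shift)
  ultimately show ?thesis by (simp add: carrier_FA)
qed

lemma fmult_one_left: "fmult (\<lambda>w. if w = [] then 1 else 0) b = b"
proof
  fix w
  have "fmult (\<lambda>w. if w = [] then 1 else 0) b w = (\<Sum>i\<in>{0..length w}. if i = 0 then b w else 0)"
    unfolding fmult_def
  proof (rule sum.cong[OF refl])
    fix i assume i: "i \<in> {0..length w}"
    show "shift (wt (drop i w)) (if take i w = [] then 1 else 0) * b (drop i w) = (if i = 0 then b w else 0)"
    proof (cases "i = 0")
      case False
      hence "take i w \<noteq> []" using i by auto
      thus ?thesis using False by (simp add: shift_0)
    qed (simp add: shift_1)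
  qed
  thus "fmult (\<lambda>w. if w = [] then 1 else 0) b w = b w" by simp
qed

lemma fmult_one_right: "fmult a (\<lambda>w. if w = [] then 1 else 0) = a"
proof
  fix w
  have "fmult a (\<lambda>w. if w = [] then 1 else 0) w = (\<Sum>i\<in>{0..length w}. if i = length w then a w else 0)"
    unfolding fmult_def
  proof (rule sum.cong[OF refl])
    fix i assume i: "i \<in> {0..length w}"
    show "shift (wt (drop i w)) (a (take i w)) * (if drop i w = [] then 1 else 0) = (if i = length w then a w else 0)"
    proof (cases "i = length w")
      case False
      hence "drop i w \<noteq> []" using i by auto
      thus ?thesis using False by simp
    qed simp
  qed
  thus "fmult a (\<lambda>w. if w = [] then 1 else 0) w = a w" by simp
qed

lemma fmult_distl: "fmult (\<lambda>w. x w + y w) z = (\<lambda>w. fmult x z w + fmult y z w)"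
  by (rule ext) (simp add: fmult_def shift_add distrib_right sum.distrib)

lemma fmult_distr: "fmult z (\<lambda>w. x w + y w) = (\<lambda>w. fmult z x w + fmult z y w)"
  by (rule ext) (simp add: fmult_def distrib_left sum.distrib)

lemma ring_FA: "ring FA"
proof (rule ringI)
  show "abelian_group FA"
  proof (rule abelian_groupI)
    fix x y assume "x \<in> carrier FA" "y \<in> carrier FA"
    thus "x \<oplus>\<^bsub>FA\<^esub> y \<in> carrier FA"
      unfolding carrier_FA add_FA
    proof (intro conjI allI)
      assume a: "finite {w. x w \<noteq> 0} \<and> (\<forall>w. x w \<in> Ubar)" "finite {w. y w \<noteq> 0} \<and> (\<forall>w. y w \<in> Ubar)"
      show "finite {w. x w + y w \<noteq> 0}"
        by (rule finite_subset[of _ "{w. x w \<noteq> 0} \<union> {w. y w \<noteq> 0}"]) (use a in auto)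
      fix w show "x w + y w \<in> Ubar" using a by (simp add: Ubar_add)
    qed
  next
    show "\<zero>\<^bsub>FA\<^esub> \<in> carrier FA" by (simp add: carrier_FA zero_FA Ubar_0)
  next
    fix x assume x: "x \<in> carrier FA"
    have "(\<lambda>w. - x w) \<in> carrier FA" using x by (simp add: carrier_FA Ubar_uminus)
    moreover have "(\<lambda>w. - x w) \<oplus>\<^bsub>FA\<^esub> x = \<zero>\<^bsub>FA\<^esub>" by (simp add: add_FA zero_FA)
    ultimately show "\<exists>y\<in>carrier FA. y \<oplus>\<^bsub>FA\<^esub> x = \<zero>\<^bsub>FA\<^esub>" by blast
  qed (auto simp: add_FA zero_FA add_ac)
next
  show "monoid FA"
  proof (rule monoidI)
    show "\<one>\<^bsub>FA\<^esub> \<in> carrier FA" by (simp add: carrier_FA one_FA Ubar_0 Ubar_1)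
  qed (simp_all add: mult_FA one_FA fmult_carrier fmult_assoc fmult_one_left fmult_one_right)
qed (simp_all add: mult_FA add_FA fmult_distl fmult_distr)



type_synonym vec = "nat \<Rightarrow> nat \<Rightarrow> rf"

definition vz :: vec where "vz = (\<lambda>n k. 0)"
definition vadd :: "vec \<Rightarrow> vec \<Rightarrow> vec" where "vadd x y = (\<lambda>n k. x n k + y n k)"
definition vsum :: "'a set \<Rightarrow> ('a \<Rightarrow> vec) \<Rightarrow> vec" where "vsum S F = (\<lambda>n k. \<Sum>s\<in>S. F s n k)"

definition linop :: "(vec \<Rightarrow> vec) \<Rightarrow> bool" where
  "linop Op \<longleftrightarrow> (\<forall>x y. Op (vadd x y) = vadd (Op x) (Op y)) \<and> Op vz = vz"

lemma linop_vsum: assumes lo: "linop Op" shows "finite S \<Longrightarrow> Op (vsum S F) = vsum S (\<lambda>s. Op (F s))"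
proof (induct S rule: finite_induct)
  case empty thus ?case using lo by (simp add: vsum_def linop_def flip: vz_def)
next
  case (insert x S)
  have "vsum (insert x S) F = vadd (F x) (vsum S F)" using insert by (simp add: vsum_def vadd_def)
  moreover have "vsum (insert x S) (\<lambda>s. Op (F s)) = vadd (Op (F x)) (vsum S (\<lambda>s. Op (F s)))"
    using insert by (simp add: vsum_def vadd_def)
  ultimately show ?case using insert lo by (simp add: linop_def)
qed

lemma linop_comp: "linop Op1 \<Longrightarrow> linop Op2 \<Longrightarrow> linop (Op1 \<circ> Op2)"
  by (simp add: linop_def)
lemma linop_id: "linop id" by (simp add: linop_def)

definition xn :: "nat \<Rightarrow> rf" where "xn n = hvar + of_nat (2 * n)"

definition cfun :: "rf \<Rightarrow> rf" where "cfun x = x * (x + 3) / ((x + 1) * (x + 2))"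

fun pp :: "nat \<Rightarrow> rf" where
  "pp 0 = 0"
| "pp (Suc n) = (pp n - xn n) / cfun (xn n)"

fun qq :: "nat \<Rightarrow> rf" where
  "qq 0 = 0"
| "qq (Suc n) = (qq n + inverse (xn n * (xn n + 2)^2)) / cfun (xn n)"

declare pp.simps(2)[simp del] qq.simps(2)[simp del]

definition Dop :: "rf \<Rightarrow> vec \<Rightarrow> vec" where "Dop f m = (\<lambda>n k. shift (2 * int n) f * m n k)"

fun Gop :: "gen \<Rightarrow> vec \<Rightarrow> vec" where
  "Gop Zp m = (\<lambda>n k. if n = 0 then 0 else m (n - 1) k)"
| "Gop T m = (\<lambda>n k. if k = 0 then 0 else inverse (xn n + 2) * m n (k - 1))"
| "Gop Zm m = (\<lambda>n k. pp (Suc n) * m (Suc n) k + (if 2 \<le> k then qq (Suc n) * m (Suc n) (k - 2) else 0))"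

fun Wop :: "gen list \<Rightarrow> vec \<Rightarrow> vec" where
  "Wop [] m = m"
| "Wop (g # w) m = Gop g (Wop w m)"

lemma linop_Gop: "linop (Gop g)"
  by (cases g) (auto simp: linop_def vadd_def vz_def algebra_simps intro!: ext)

lemma linop_Dop: "linop (Dop f)"
  by (auto simp: linop_def vadd_def vz_def Dop_def algebra_simps intro!: ext)

lemma linop_Wop: "linop (Wop w)"
proof (induct w)
  case Nil thus ?case by (simp add: linop_def)
next
  case (Cons g w)
  have "Wop (g # w) = Gop g \<circ> Wop w" by (rule ext) simp
  thus ?case using Cons linop_Gop linop_comp by metis
qed

lemma Wop_append: "Wop (u @ v) m = Wop u (Wop v m)"
  by (induct u) auto

lemma Dop_mult: "Dop (f * g) m = Dop f (Dop g m)"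
  by (simp add: Dop_def shift_mult mult.assoc)
lemma Dop_add: "Dop (f + g) m = vadd (Dop f m) (Dop g m)"
  by (simp add: Dop_def vadd_def shift_add distrib_right)
lemma Dop_0: "Dop 0 m = vz"
  by (simp add: Dop_def vz_def shift_0)
lemma Dop_1: "Dop 1 m = m"
  by (simp add: Dop_def shift_1)
lemma Dop_sum: "finite S \<Longrightarrow> Dop (sum F S) m = vsum S (\<lambda>s. Dop (F s) m)"
proof (induct S rule: finite_induct)
  case empty thus ?case by (simp add: vsum_def Dop_0 vz_def)
next
  case (insert x S) thus ?case by (simp add: Dop_add vsum_def vadd_def)
qed

lemma shift_xn: "shift (2 * int n) hvar = xn n"
  by (simp add: shift_hvar xn_def)

lemma Dop_Gop: "Dop f (Gop g m) = Gop g (Dop (shift (gwt g) f) m)"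
proof (cases g)
  case Zp thus ?thesis
    by (auto simp: Dop_def shift_shift intro!: ext)
next
  case Zm thus ?thesis
    by (auto simp: Dop_def shift_shift algebra_simps intro!: ext)
next
  case T thus ?thesis
    by (auto simp: Dop_def algebra_simps intro!: ext)
qed

lemma Dop_Wop: "Dop f (Wop w m) = Wop w (Dop (shift (wt w) f) m)"
  by (induct w arbitrary: f) (simp_all add: Dop_Gop shift_shift add.commute)



definition rho :: "(gen list \<Rightarrow> rf) \<Rightarrow> vec \<Rightarrow> vec" where
  "rho a m = vsum {w. a w \<noteq> 0} (\<lambda>w. Wop w (Dop (a w) m))"

lemma Wop_vz: "Wop w vz = vz" using linop_Wop[of w] by (simp add: linop_def)
lemma Dop_vz: "Dop f vz = vz" by (simp add: Dop_def vz_def)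
lemma Wop_vz': "Wop w (\<lambda>n k. 0) n k = 0" using Wop_vz[of w] by (simp add: vz_def fun_eq_iff)
lemma Wop_vz'': "Wop w (\<lambda>n k. 0) = (\<lambda>n k. 0)" using Wop_vz[of w] by (simp add: vz_def)
lemma Dop_vz': "Dop f (\<lambda>n k. 0) = (\<lambda>n k. 0)" using Dop_vz[of f] by (simp add: vz_def)

lemma rho_super:
  assumes "finite S" "{w. a w \<noteq> 0} \<subseteq> S"
  shows "rho a m = vsum S (\<lambda>w. Wop w (Dop (a w) m))"
  unfolding rho_def vsum_def
proof (intro ext)
  fix n k
  show "(\<Sum>w\<in>{w. a w \<noteq> 0}. Wop w (Dop (a w) m) n k) = (\<Sum>w\<in>S. Wop w (Dop (a w) m) n k)"
    by (rule sum.mono_neutral_left) (use assms in \<open>auto simp: Dop_0 Wop_vz' vz_def\<close>)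
qed

lemma split_sum:
  fixes T :: "gen list \<Rightarrow> gen list \<Rightarrow> rf"
  assumes A: "finite A" and B: "finite B" and T: "\<And>u v. T u v \<noteq> 0 \<Longrightarrow> u \<in> A \<and> v \<in> B"
  shows "(\<Sum>w\<in>(\<lambda>(u,v). u @ v) ` (A \<times> B). \<Sum>i\<in>{0..length w}. T (take i w) (drop i w))
       = (\<Sum>u\<in>A. \<Sum>v\<in>B. T u v)"
proof -
  let ?W = "(\<lambda>(u,v). u @ v) ` (A \<times> B)"
  let ?S = "Sigma ?W (\<lambda>w. {0..length w})"
  let ?g = "\<lambda>(w, i). (take i w, drop i w)"
  have fW: "finite ?W" using A B by simp
  have fS: "finite ?S" by (rule finite_SigmaI[OF fW]) simp
  have "(\<Sum>w\<in>?W. \<Sum>i\<in>{0..length w}. T (take i w) (drop i w)) = (\<Sum>(w,i)\<in>?S. T (take i w) (drop i w))"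
    by (rule sum.Sigma[OF fW]) simp
  also have "\<dots> = (\<Sum>p\<in>?g ` ?S. T (fst p) (snd p))"
  proof -
    have inj: "inj_on ?g ?S"
    proof (rule inj_onI)
      fix x y assume "x \<in> ?S" "y \<in> ?S" "?g x = ?g y"
      moreover obtain w1 i1 w2 i2 where xy: "x = (w1, i1)" "y = (w2, i2)" by (cases x, cases y)
      ultimately have e: "take i1 w1 = take i2 w2" "drop i1 w1 = drop i2 w2" "i1 \<le> length w1" "i2 \<le> length w2"
        by auto
      have "w1 = w2" using e(1,2) by (metis append_take_drop_id)
      moreover have "i1 = length (take i1 w1)" "i2 = length (take i2 w2)" using e(3,4) by simp_all
      hence "i1 = i2" using e(1) by simp
      ultimately show "x = y" using xy by simp
    qed
    have "(\<Sum>p\<in>?g ` ?S. T (fst p) (snd p)) = sum ((\<lambda>p. T (fst p) (snd p)) \<circ> ?g) ?S"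
      by (rule sum.reindex[OF inj])
    also have "\<dots> = (\<Sum>(w,i)\<in>?S. T (take i w) (drop i w))"
    proof (rule sum.cong[OF refl])
      fix x assume "x \<in> ?S"
      obtain w i where "x = (w, i)" by (cases x)
      thus "((\<lambda>p. T (fst p) (snd p)) \<circ> ?g) x = (case x of (w, i) \<Rightarrow> T (take i w) (drop i w))" by simp
    qed
    finally show ?thesis by (rule sym)
  qed
  also have "\<dots> = (\<Sum>p\<in>A \<times> B. T (fst p) (snd p))"
  proof (rule sum.mono_neutral_right)
    show "finite (?g ` ?S)" using fS by simp
    show "A \<times> B \<subseteq> ?g ` ?S"
    proof
      fix p assume p: "p \<in> A \<times> B"
      obtain u v where uv: "p = (u, v)" by (cases p)
      have "u @ v \<in> ?W" using p uv by (intro image_eqI[of _ _ "(u, v)"]) simp_all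
      hence "(u @ v, length u) \<in> ?S" by simp
      moreover have "p = ?g (u @ v, length u)" using uv by simp
      ultimately show "p \<in> ?g ` ?S" by (rule rev_image_eqI)
    qed
    show "\<forall>p\<in>?g ` ?S - A \<times> B. T (fst p) (snd p) = 0"
    proof
      fix p assume "p \<in> ?g ` ?S - A \<times> B"
      hence "p \<notin> A \<times> B" by simp
      thus "T (fst p) (snd p) = 0" using T[of "fst p" "snd p"] by (cases p) auto
    qed
  qed
  also have "\<dots> = (\<Sum>u\<in>A. \<Sum>v\<in>B. T u v)"
    by (simp add: sum.cartesian_product case_prod_beta)
  finally show ?thesis .
qed

lemma rho_mult:
  assumes fa: "finite {w. a w \<noteq> 0}" and fb: "finite {w. b w \<noteq> 0}"
  shows "rho (fmult a b) m = rho a (rho b m)"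
proof -
  let ?A = "{w. a w \<noteq> 0}" and ?B = "{w. b w \<noteq> 0}"
  let ?W = "(\<lambda>(u,v). u @ v) ` (?A \<times> ?B)"
  define T where "T u v = Wop u (Dop (a u) (Wop v (Dop (b v) m)))" for u v
  have T0: "T u v n k \<noteq> 0 \<Longrightarrow> u \<in> ?A \<and> v \<in> ?B" for u v n k
    by (cases "a u = 0"; cases "b v = 0") (simp_all add: T_def Dop_0 Wop_vz Dop_vz, simp_all add: vz_def)
  have L: "rho (fmult a b) m = vsum ?W (\<lambda>w. vsum {0..length w} (\<lambda>i. T (take i w) (drop i w)))"
  proof -
    have "rho (fmult a b) m = vsum ?W (\<lambda>w. Wop w (Dop (fmult a b w) m))"
      using fa fb by (intro rho_super fmult_supp) auto
    also have "\<dots> = vsum ?W (\<lambda>w. vsum {0..length w} (\<lambda>i. T (take i w) (drop i w)))"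
    proof -
      have "Wop w (Dop (fmult a b w) m) = vsum {0..length w} (\<lambda>i. T (take i w) (drop i w))" for w
      proof -
        have "Wop w (Dop (fmult a b w) m)
            = Wop w (vsum {0..length w} (\<lambda>i. Dop (shift (wt (drop i w)) (a (take i w)) * b (drop i w)) m))"
          by (simp add: fmult_def Dop_sum)
        also have "\<dots> = vsum {0..length w} (\<lambda>i. Wop w (Dop (shift (wt (drop i w)) (a (take i w)) * b (drop i w)) m))"
          by (simp add: linop_vsum linop_Wop)
        also have "\<dots> = vsum {0..length w} (\<lambda>i. T (take i w) (drop i w))"
        proof -
          have "Wop w (Dop (shift (wt (drop i w)) (a (take i w)) * b (drop i w)) m) = T (take i w) (drop i w)" for i
          proof -
            have "Wop w (Dop (shift (wt (drop i w)) (a (take i w)) * b (drop i w)) m)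
               = Wop (take i w) (Wop (drop i w) (Dop (shift (wt (drop i w)) (a (take i w))) (Dop (b (drop i w)) m)))"
              using Wop_append[of "take i w" "drop i w"] by (simp add: Dop_mult)
            also have "\<dots> = T (take i w) (drop i w)"
              by (simp add: T_def Dop_Wop)
            finally show ?thesis .
          qed
          thus ?thesis by simp
        qed
        finally show ?thesis .
      qed
      thus ?thesis by simp
    qed
    finally show ?thesis .
  qed
  have R: "rho a (rho b m) = vsum ?A (\<lambda>u. vsum ?B (\<lambda>v. T u v))"
  proof -
    have "rho a (rho b m) = vsum ?A (\<lambda>u. Wop u (Dop (a u) (vsum ?B (\<lambda>v. Wop v (Dop (b v) m)))))"
      by (simp add: rho_def)
    also have "\<dots> = vsum ?A (\<lambda>u. vsum ?B (\<lambda>v. T u v))"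
      using fb by (simp add: T_def linop_vsum linop_Wop linop_Dop)
    finally show ?thesis .
  qed
  show ?thesis
    unfolding L R vsum_def
  proof (intro ext)
    fix n k
    show "(\<Sum>w\<in>?W. \<Sum>i\<in>{0..length w}. T (take i w) (drop i w) n k) = (\<Sum>u\<in>?A. \<Sum>v\<in>?B. T u v n k)"
      by (rule split_sum[OF fa fb]) (use T0 in blast)
  qed
qed



lemma rho_vz: "rho a vz = vz"
  unfolding rho_def Dop_vz Wop_vz by (simp add: vsum_def vz_def)

lemma rho_add:
  assumes fa: "finite {w. a w \<noteq> 0}" and fb: "finite {w. b w \<noteq> 0}"
  shows "rho (\<lambda>w. a w + b w) m = vadd (rho a m) (rho b m)"
proof -
  let ?S = "{w. a w \<noteq> 0} \<union> {w. b w \<noteq> 0}"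
  have f: "finite ?S" using fa fb by simp
  have "rho (\<lambda>w. a w + b w) m = vsum ?S (\<lambda>w. Wop w (Dop (a w + b w) m))"
    by (rule rho_super[OF f]) auto
  moreover have "rho a m = vsum ?S (\<lambda>w. Wop w (Dop (a w) m))" by (rule rho_super[OF f]) auto
  moreover have "rho b m = vsum ?S (\<lambda>w. Wop w (Dop (b w) m))" by (rule rho_super[OF f]) auto
  moreover have "Wop w (Dop (a w + b w) m) = vadd (Wop w (Dop (a w) m)) (Wop w (Dop (b w) m))" for w
    using linop_Wop[of w] by (simp add: Dop_add linop_def)
  ultimately show ?thesis by (simp add: vsum_def vadd_def sum.distrib)
qed

lemma rho_zero: "rho (\<lambda>w. 0) m = vz"
  by (simp add: rho_def vsum_def vz_def)

lemma FA_minus: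
  assumes "x \<in> carrier FA" shows "\<ominus>\<^bsub>FA\<^esub> x = (\<lambda>w. - x w)"
proof -
  interpret ring FA by (rule ring_FA)
  have "(\<lambda>w. - x w) \<in> carrier FA" using assms by (simp add: carrier_FA Ubar_uminus)
  moreover have "(\<lambda>w. - x w) \<oplus>\<^bsub>FA\<^esub> x = \<zero>\<^bsub>FA\<^esub>" by (simp add: add_FA zero_FA)
  ultimately show ?thesis using assms by (simp add: minus_equality)
qed

definition Ker :: "(gen list \<Rightarrow> rf) set" where
  "Ker = {a \<in> carrier FA. \<forall>m. rho a m = vz}"

lemma ideal_Ker: "ideal Ker FA"
proof (rule idealI[OF ring_FA])
  show "subgroup Ker (add_monoid FA)"
  proof
    show "Ker \<subseteq> carrier (add_monoid FA)" by (auto simp: Ker_def)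
  next
    fix x y assume x: "x \<in> Ker" and y: "y \<in> Ker"
    hence "x \<oplus>\<^bsub>FA\<^esub> y \<in> carrier FA" using ring.ring_simprules(1)[OF ring_FA] by (auto simp: Ker_def)
    moreover have "rho (x \<oplus>\<^bsub>FA\<^esub> y) m = vz" for m
      using x y by (auto simp: Ker_def add_FA carrier_FA rho_add vadd_def vz_def)
    ultimately show "x \<otimes>\<^bsub>add_monoid FA\<^esub> y \<in> Ker" by (simp add: Ker_def)
  next
    show "\<one>\<^bsub>add_monoid FA\<^esub> \<in> Ker"
      using ring.ring_simprules(2)[OF ring_FA] by (simp add: Ker_def zero_FA rho_zero)
  next
    fix x assume x: "x \<in> Ker"
    hence xc: "x \<in> carrier FA" by (simp add: Ker_def)
    have "inv\<^bsub>add_monoid FA\<^esub> x = (\<lambda>w. - x w)"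
      using FA_minus[OF xc] by (simp add: a_inv_def)
    moreover have "(\<lambda>w. - x w) \<in> carrier FA" using xc by (simp add: carrier_FA Ubar_uminus)
    moreover have "rho (\<lambda>w. - x w) m = vz" for m
    proof -
      have "rho (\<lambda>w. x w + - x w) m = vadd (rho x m) (rho (\<lambda>w. - x w) m)"
        using xc by (intro rho_add) (auto simp: carrier_FA)
      hence "vz = vadd vz (rho (\<lambda>w. - x w) m)" using x by (simp add: Ker_def rho_zero)
      thus ?thesis by (simp add: vadd_def vz_def)
    qed
    ultimately show "inv\<^bsub>add_monoid FA\<^esub> x \<in> Ker" by (simp add: Ker_def)
  qed
next
  fix a x assume a: "a \<in> Ker" and x: "x \<in> carrier FA"
  have ac: "a \<in> carrier FA" using a by (simp add: Ker_def)
  have fa: "finite {w. a w \<noteq> 0}" and fx: "finite {w. x w \<noteq> 0}" using ac x by (auto simp: carrier_FA)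
  have r: "\<forall>m. rho a m = vz" using a by (simp add: Ker_def)
  show "x \<otimes>\<^bsub>FA\<^esub> a \<in> Ker"
    using fmult_carrier[OF x ac] r by (simp add: Ker_def mult_FA rho_mult[OF fx fa] rho_vz)
  show "a \<otimes>\<^bsub>FA\<^esub> x \<in> Ker"
    using fmult_carrier[OF ac x] r by (simp add: Ker_def mult_FA rho_mult[OF fa fx] rho_vz)
qed



definition ev :: "nat \<Rightarrow> rf \<Rightarrow> rf" where "ev n f = shift (2 * int n) f"

lemma ev_add[simp]: "ev n (f + g) = ev n f + ev n g" by (simp add: ev_def shift_add)
lemma ev_diff[simp]: "ev n (f - g) = ev n f - ev n g" by (simp add: ev_def shift_diff)
lemma ev_mult[simp]: "ev n (f * g) = ev n f * ev n g" by (simp add: ev_def shift_mult)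
lemma ev_uminus[simp]: "ev n (- f) = - ev n f" by (simp add: ev_def shift_uminus)
lemma ev_divide[simp]: "ev n (f / g) = ev n f / ev n g" by (simp add: ev_def shift_divide)
lemma ev_inverse[simp]: "ev n (inverse f) = inverse (ev n f)" by (simp add: ev_def shift_inverse)
lemma ev_0[simp]: "ev n 0 = 0" by (simp add: ev_def shift_0)
lemma ev_1[simp]: "ev n 1 = 1" by (simp add: ev_def shift_1)
lemma ev_numeral[simp]: "ev n (numeral j) = numeral j" by (simp add: ev_def shift_numeral)
lemma ev_hvar[simp]: "ev n hvar = xn n" by (simp add: ev_def shift_hvar xn_def)
lemma ev_power[simp]: "ev n (f ^ j) = ev n f ^ j" by (induct j) simp_all

lemma Dop_ev: "Dop f m n k = ev n f * m n k" by (simp add: Dop_def ev_def)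

lemma xn_Suc[simp]: "xn (Suc n) = xn n + 2" by (simp add: xn_def)
lemma xn_eq: "xn n = hvar + of_int (2 * int n)" by (simp add: xn_def)
lemma xn_plus_int_nz: "xn n + of_int j \<noteq> 0"
  using hvar_plus_int_nz[of "2 * int n + j"] by (simp add: xn_eq add.assoc)
lemma xn_nz[simp]: "xn n \<noteq> 0" using xn_plus_int_nz[of n 0] by simp
lemma xn_plus_nz[simp]: "xn n + numeral j \<noteq> 0" using xn_plus_int_nz[of n "numeral j"] by simp
lemma xn_plus1_nz[simp]: "xn n + 1 \<noteq> 0" using xn_plus_int_nz[of n 1] by simp
lemma xn_plus_nz'[simp]: "numeral j + xn n \<noteq> 0" using xn_plus_nz[of n j] by (simp add: add.commute)
lemma xn_plus1_nz'[simp]: "1 + xn n \<noteq> 0" using xn_plus1_nz[of n] by (simp add: add.commute)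
lemma xn_comm: "numeral j + xn n = xn n + numeral j" "1 + xn n = xn n + 1" by (simp_all add: add.commute)
lemma xn_minus_nz[simp]: "xn n - numeral j \<noteq> 0" using xn_plus_int_nz[of n "- numeral j"] by simp
lemma xn_minus1_nz[simp]: "xn n - 1 \<noteq> 0" using xn_plus_int_nz[of n "- 1"] by simp

lemma cfun_nz[simp]: "cfun (xn n) \<noteq> 0"
proof -
  have "xn n + 3 \<noteq> 0" by (rule xn_plus_nz)
  thus ?thesis by (simp add: cfun_def)
qed

lemma pp_rec: "pp (Suc n) * cfun (xn n) = pp n - xn n" by (simp add: pp.simps(2))
lemma qq_rec: "qq (Suc n) * cfun (xn n) = qq n + inverse (xn n * (xn n + 2)^2)" by (simp add: qq.simps(2))

lemma mono_apply: "mono w f v = (if v = w then f else 0)" by (simp add: mono_def)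

lemma carrierI_fin:
  assumes "finite S" "\<And>v. v \<notin> S \<Longrightarrow> a v = 0" "\<And>v. a v \<in> Ubar"
  shows "a \<in> carrier FA"
  using assms by (auto simp: carrier_FA intro: finite_subset[of _ S])

definition rel1 where "rel1 = (\<lambda>v. mono [Zp, T] 1 v - mono [T, Zp] ((hvar + 4) / (hvar + 2)) v)"
definition rel2 where "rel2 = (\<lambda>v. mono [Zp, Zm] 1 v - mono [] hvar v + mono [T, T] (1 / hvar) v
            - mono [Zm, Zp] (hvar * (hvar + 3) / ((hvar + 1) * (hvar + 2))) v)"
definition rel3 where "rel3 = (\<lambda>v. mono [T, Zm] 1 v - mono [Zm, T] ((hvar + 2) / hvar) v)"

lemma rels_eq: "rels = {rel1, rel2, rel3}" by (simp add: rels_def rel1_def rel2_def rel3_def)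

lemma Ubar_frac: "f \<in> Ubar \<Longrightarrow> f / (hvar + numeral j) \<in> Ubar"
  by (simp add: divide_inverse Ubar_mult Ubar_inv_plus)

lemma rel1_carrier: "rel1 \<in> carrier FA"
  by (rule carrierI_fin[of "{[Zp,T],[T,Zp]}"])
     (auto simp: rel1_def mono_apply Ubar_0 Ubar_1 Ubar_uminus Ubar_frac Ubar_add Ubar_hvar Ubar_numeral)

lemma rel1_rho: "rho rel1 m = vz"
proof -
  have "rho rel1 m = vsum {[Zp,T],[T,Zp]} (\<lambda>w. Wop w (Dop (rel1 w) m))"
    by (rule rho_super) (auto simp: rel1_def mono_apply)
  also have "\<dots> = vz"
  proof (intro ext)
    fix n k
    show "vsum {[Zp,T],[T,Zp]} (\<lambda>w. Wop w (Dop (rel1 w) m)) n k = vz n k"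
    proof (cases n; cases k)
      fix n' k' assume "n = Suc n'" "k = Suc k'"
      thus ?thesis by (simp add: vsum_def vz_def rel1_def mono_apply Dop_ev xn_comm) (simp add: divide_simps)
    qed (simp_all add: vsum_def vz_def rel1_def mono_apply Dop_ev)
  qed
  finally show ?thesis .
qed



definition c2 :: rf where "c2 = hvar * (hvar + 3) / ((hvar + 1) * (hvar + 2))"
lemma ev_c2: "ev n c2 = cfun (xn n)" by (simp add: c2_def cfun_def)

lemma rel2_eq: "rel2 = (\<lambda>v. mono [Zp, Zm] 1 v - mono [] hvar v + mono [T, T] (1 / hvar) v - mono [Zm, Zp] c2 v)"
  by (simp add: rel2_def c2_def)

lemma Ubar_c2: "c2 \<in> Ubar"
  unfolding c2_def divide_inverse
  by (intro Ubar_mult Ubar_add Ubar_hvar Ubar_numeral Ubar_1)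
     (metis Ubar_inv_lin Ubar_mult inverse_mult_distrib of_int_1 of_int_numeral)

lemma rel2_carrier: "rel2 \<in> carrier FA"
  by (rule carrierI_fin[of "{[Zp,Zm],[],[T,T],[Zm,Zp]}"])
     (auto simp: rel2_eq mono_apply Ubar_0 Ubar_1 Ubar_uminus Ubar_add Ubar_hvar Ubar_numeral
        Ubar_c2 Ubar_inv_hvar Ubar_diff divide_inverse)

lemma ZpZm_apply: "Wop [Zp, Zm] x n k = pp n * x n k + (if 2 \<le> k then qq n * x n (k - 2) else 0)"
  by (cases n) simp_all

lemma ZmZp_apply: "Wop [Zm, Zp] (Dop f m) n k
   = pp (Suc n) * ev n f * m n k + (if 2 \<le> k then qq (Suc n) * ev n f * m n (k - 2) else 0)"
  by (simp add: Dop_ev mult.assoc)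

lemma TT_apply: "Wop [T, T] x n k = (if 2 \<le> k then inverse (xn n + 2) ^ 2 * x n (k - 2) else 0)"
  by (cases k; cases "k - 1") (simp_all add: power2_eq_square numeral_2_eq_2)

lemma rel2_rho: "rho rel2 m = vz"
proof -
  let ?S = "{[Zp,Zm],[],[T,T],[Zm,Zp]}"
  have "rho rel2 m = vsum ?S (\<lambda>w. Wop w (Dop (rel2 w) m))"
    by (rule rho_super) (auto simp: rel2_eq mono_apply)
  also have "\<dots> = vz"
  proof (intro ext)
    fix n k
    have e: "vsum ?S (\<lambda>w. Wop w (Dop (rel2 w) m)) n k
      = Wop [Zp,Zm] (Dop 1 m) n k + Wop [] (Dop (- hvar) m) n k + Wop [T,T] (Dop (1 / hvar) m) n k
        + Wop [Zm,Zp] (Dop (- c2) m) n k"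
      by (simp add: vsum_def rel2_eq mono_apply add.assoc)
    also have "\<dots> = (pp n - xn n - pp (Suc n) * cfun (xn n)) * m n k
        + (if 2 \<le> k then (qq n + inverse (xn n + 2) ^ 2 * inverse (xn n) - qq (Suc n) * cfun (xn n)) * m n (k - 2) else 0)"
      unfolding ZpZm_apply ZmZp_apply TT_apply
      by (simp add: Dop_ev ev_c2 algebra_simps divide_inverse)
    also have "\<dots> = 0"
      by (simp add: pp_rec qq_rec inverse_mult_distrib power_inverse)
    finally show "vsum ?S (\<lambda>w. Wop w (Dop (rel2 w) m)) n k = vz n k" by (simp add: vz_def)
  qed
  finally show ?thesis .
qed

lemma rel3_carrier: "rel3 \<in> carrier FA"
  by (rule carrierI_fin[of "{[T,Zm],[Zm,T]}"])
     (auto simp: rel3_def mono_apply Ubar_0 Ubar_1 Ubar_uminus Ubar_add Ubar_hvar Ubar_numeral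
        Ubar_inv_hvar divide_inverse Ubar_mult)

lemma rel3_rho: "rho rel3 m = vz"
proof -
  have "rho rel3 m = vsum {[T,Zm],[Zm,T]} (\<lambda>w. Wop w (Dop (rel3 w) m))"
    by (rule rho_super) (auto simp: rel3_def mono_apply)
  also have "\<dots> = vz"
  proof (intro ext)
    fix n k
    show "vsum {[T,Zm],[Zm,T]} (\<lambda>w. Wop w (Dop (rel3 w) m)) n k = vz n k"
    proof (cases k)
      case (Suc k1)
      show ?thesis
      proof (cases k1)
        case (Suc k2)
        show ?thesis
        proof (cases k2)
          case (Suc k3)
          thus ?thesis using \<open>k = Suc k1\<close> \<open>k1 = Suc k2\<close>
            by (simp add: vsum_def vz_def rel3_def mono_apply Dop_ev xn_comm) (simp add: divide_simps)
        qed (use \<open>k = Suc k1\<close> \<open>k1 = Suc k2\<close> in \<open>simp add: vsum_def vz_def rel3_def mono_apply Dop_ev xn_comm, simp add: divide_simps\<close>)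
      qed (use \<open>k = Suc k1\<close> in \<open>simp add: vsum_def vz_def rel3_def mono_apply Dop_ev xn_comm, simp add: divide_simps\<close>)
    qed (simp add: vsum_def vz_def rel3_def mono_apply Dop_ev)
  qed
  finally show ?thesis .
qed

lemma rel1_in_Ker: "rel1 \<in> Ker" by (simp add: Ker_def rel1_carrier rel1_rho)
lemma rel2_in_Ker: "rel2 \<in> Ker" by (simp add: Ker_def rel2_carrier rel2_rho)
lemma rel3_in_Ker: "rel3 \<in> Ker" by (simp add: Ker_def rel3_carrier rel3_rho)

lemma rels_carrier: "rels \<subseteq> carrier FA"
  by (simp add: rels_eq rel1_carrier rel2_carrier rel3_carrier)

lemma ideal_DR: "ideal DRideal FA"
  unfolding DRideal_def by (rule ring.genideal_ideal[OF ring_FA rels_carrier])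

lemma DRideal_Ker: "DRideal \<subseteq> Ker"
  unfolding DRideal_def
  by (rule ring.genideal_minimal[OF ring_FA ideal_Ker])
     (simp add: rels_eq rel1_in_Ker rel2_in_Ker rel3_in_Ker)

lemma DRideal_rho: "a \<in> DRideal \<Longrightarrow> rho a m = vz"
  using DRideal_Ker by (auto simp: Ker_def)



abbreviation M :: "gen list \<Rightarrow> rf \<Rightarrow> (gen list \<Rightarrow> rf) set" where "M w f \<equiv> cls (mono w f)"

lemma mono_carrier: "f \<in> Ubar \<Longrightarrow> mono w f \<in> carrier FA"
  by (rule carrierI_fin[of "{w}"]) (auto simp: mono_apply Ubar_0)

lemma mono_mult: "fmult (mono u f) (mono v g) = mono (u @ v) (shift (wt v) f * g)"
proof
  fix w
  show "fmult (mono u f) (mono v g) w = mono (u @ v) (shift (wt v) f * g) w"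
  proof (cases "w = u @ v")
    case True
    have "fmult (mono u f) (mono v g) w = (\<Sum>i\<in>{0..length w}. if i = length u then shift (wt v) f * g else 0)"
      unfolding fmult_def
    proof (rule sum.cong[OF refl])
      fix i assume i: "i \<in> {0..length w}"
      show "shift (wt (drop i w)) (mono u f (take i w)) * mono v g (drop i w) = (if i = length u then shift (wt v) f * g else 0)"
      proof (cases "i = length u")
        case False
        have "take i w \<noteq> u \<or> drop i w \<noteq> v"
        proof (rule ccontr)
          assume "\<not> ?thesis"
          hence "take i w = u" by simp
          hence "length u = i" using i by auto
          thus False using False by simp
        qed
        thus ?thesis using False by (auto simp: mono_apply shift_0)
      qed (simp add: True mono_apply)
    qed
    thus ?thesis using True by (simp add: mono_apply)
  next
    case False
    have "fmult (mono u f) (mono v g) w = (\<Sum>i\<in>{0..length w}. 0)"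
      unfolding fmult_def
    proof (rule sum.cong[OF refl])
      fix i
      have "take i w \<noteq> u \<or> drop i w \<noteq> v" using False by (metis append_take_drop_id)
      thus "shift (wt (drop i w)) (mono u f (take i w)) * mono v g (drop i w) = 0"
        by (auto simp: mono_apply shift_0)
    qed
    thus ?thesis using False by (simp add: mono_apply)
  qed
qed

lemma fmult_mono_Nil_right: "fmult a (mono [] g) = (\<lambda>w. a w * g)"
proof
  fix w
  have "fmult a (mono [] g) w = (\<Sum>i\<in>{0..length w}. if i = length w then a w * g else 0)"
    unfolding fmult_def
  proof (rule sum.cong[OF refl])
    fix i assume i: "i \<in> {0..length w}"
    show "shift (wt (drop i w)) (a (take i w)) * mono [] g (drop i w) = (if i = length w then a w * g else 0)"
    proof (cases "i = length w")
      case False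
      hence "drop i w \<noteq> []" using i by auto
      thus ?thesis using False by (simp add: mono_apply)
    qed (simp add: mono_apply)
  qed
  thus "fmult a (mono [] g) w = a w * g" by simp
qed

lemma DR_abel: "abelian_subgroup DRideal FA"
  by (rule abelian_subgroupI3[OF ideal.axioms(1)[OF ideal_DR] ring.is_abelian_group[OF ring_FA]])

lemma ring_DR: "ring DR" unfolding DR_def by (rule ideal.quotient_is_ring[OF ideal_DR])

lemma cls_carrier: "x \<in> carrier FA \<Longrightarrow> cls x \<in> carrier DR"
  by (simp add: cls_def DR_def FactRing_def A_RCOSETS_def' a_r_coset_def[symmetric]) blast

lemma cls_mult: "x \<in> carrier FA \<Longrightarrow> y \<in> carrier FA \<Longrightarrow> cls x \<otimes>\<^bsub>DR\<^esub> cls y = cls (fmult x y)"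
  by (simp add: cls_def DR_def FactRing_def ideal.rcoset_mult_add[OF ideal_DR] mult_FA)

lemma cls_add: "x \<in> carrier FA \<Longrightarrow> y \<in> carrier FA \<Longrightarrow> cls x \<oplus>\<^bsub>DR\<^esub> cls y = cls (\<lambda>w. x w + y w)"
  by (simp add: cls_def DR_def FactRing_def ideal.a_rcos_sum[OF ideal_DR] add_FA)

lemma M_mult: "f \<in> Ubar \<Longrightarrow> g \<in> Ubar \<Longrightarrow> M u f \<otimes>\<^bsub>DR\<^esub> M v g = M (u @ v) (shift (wt v) f * g)"
  by (simp add: cls_mult mono_carrier mono_mult)

lemma M_add: "f \<in> Ubar \<Longrightarrow> g \<in> Ubar \<Longrightarrow> M w f \<oplus>\<^bsub>DR\<^esub> M w g = M w (f + g)"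
proof -
  assume "f \<in> Ubar" "g \<in> Ubar"
  hence "M w f \<oplus>\<^bsub>DR\<^esub> M w g = cls (\<lambda>v. mono w f v + mono w g v)" by (simp add: cls_add mono_carrier)
  also have "(\<lambda>v. mono w f v + mono w g v) = mono w (f + g)" by (auto simp: mono_apply)
  finally show ?thesis .
qed

lemma cls_eq_rho:
  assumes x: "x \<in> carrier FA" and y: "y \<in> carrier FA" and e: "cls x = cls y"
  shows "rho x m = rho y m"
proof -
  have "x \<in> cls x" unfolding cls_def a_r_coset_def'
    using additive_subgroup.zero_closed[OF ideal.axioms(1)[OF ideal_DR]] x
    by (auto simp: add_FA zero_FA intro!: bexI[of _ "\<lambda>w. 0"])
  hence "x \<in> cls y" using e by simp
  then obtain i where i: "i \<in> DRideal" and xi: "x = i \<oplus>\<^bsub>FA\<^esub> y"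
    unfolding cls_def a_r_coset_def' by auto
  have ic: "i \<in> carrier FA" using i ideal.Icarr[OF ideal_DR] by blast
  have "rho x m = vadd (rho i m) (rho y m)"
    using xi ic y by (simp add: add_FA rho_add carrier_FA)
  also have "\<dots> = rho y m" using DRideal_rho[OF i] by (simp add: vadd_def vz_def)
  finally show ?thesis .
qed

lemma cls_eqI:
  assumes x: "x \<in> carrier FA" and y: "y \<in> carrier FA" and d: "(\<lambda>w. x w - y w) \<in> DRideal"
  shows "cls x = cls y"
proof -
  have "x = (\<lambda>w. x w - y w) \<oplus>\<^bsub>FA\<^esub> y" by (simp add: add_FA)
  hence "x \<in> cls y" unfolding cls_def a_r_coset_def' using d by blast
  thus ?thesis unfolding cls_def
    using abelian_subgroup.a_repr_independence'[OF DR_abel] y by metis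
qed

lemma rho_mono: "rho (mono w f) m = Wop w (Dop f m)"
proof -
  have "rho (mono w f) m = vsum {w} (\<lambda>v. Wop v (Dop (mono w f v) m))"
    by (rule rho_super) (auto simp: mono_apply)
  thus ?thesis by (simp add: vsum_def mono_apply)
qed



lemma shift_const_ne: "shift 2 (of_int c) \<noteq> of_int c - 2"
  by (simp add: shift_of_int)

lemma f1_ne: assumes "shift 2 f1 = f1 - 2" shows "f1 \<noteq> 0" "f1 + 1 \<noteq> 0" "f1 + 2 \<noteq> 0"
proof -
  show "f1 \<noteq> 0" using assms by (auto simp: shift_0)
  show "f1 + 1 \<noteq> 0"
  proof
    assume "f1 + 1 = 0" hence "f1 = - 1" by (simp add: eq_neg_iff_add_eq_0)
    thus False using assms by (simp add: shift_uminus shift_1)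
  qed
  show "f1 + 2 \<noteq> 0"
  proof
    assume "f1 + 2 = 0" hence "f1 = - 2" by (simp add: eq_neg_iff_add_eq_0)
    thus False using assms by (simp add: shift_uminus shift_numeral)
  qed
qed

lemma hvar_ne: "hvar \<noteq> 0" "hvar + 1 \<noteq> 0" "hvar + 2 \<noteq> 0" "hvar + 3 \<noteq> 0" "hvar + 4 \<noteq> 0" "hvar - 1 \<noteq> 0"
  using hvar_nz hvar_plus_int_nz[of 2] hvar_plus_int_nz[of 3] hvar_plus_int_nz[of 4]
    hvar_plus_int_nz[of 1] hvar_plus_int_nz[of "-1"] by auto

lemma gen_alg1:
  fixes x y c a b :: "'a::field"
  assumes "x \<noteq> 0" "y \<noteq> 0" "c \<noteq> 0"
    and "(inverse (x * y^2) / c) * (- (a * c / x)) + inverse y ^ 2 * b = 0"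
  shows "b * (x * x) = a"
proof -
  have "(inverse (x * y^2) / c) * (- (a * c / x)) + inverse y ^ 2 * b = (b * (x * x) - a) / (x * x * y^2)"
    using assms(1-3) by (simp add: field_simps power2_eq_square)
  thus ?thesis using assms by simp
qed

lemma gen_alg2:
  fixes x u v S e f :: "'a::field"
  assumes "x \<noteq> 0" "u \<noteq> 0" "v \<noteq> 0"
    and "S * (e * ((f - 2) / u)) * f / v = e * (f / x) * S * (f + 2) / u"
  shows "S * e * f * ((f - 2) * x - (f + 2) * v) = 0"
proof -
  have "S * (e * ((f - 2) / u)) * f / v - e * (f / x) * S * (f + 2) / u
      = S * e * f * ((f - 2) * x - (f + 2) * v) / (u * v * x)"
    using assms(1-3) by (simp add: field_simps)
  thus ?thesis using assms by simp
qed

lemma gen_alg3: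
  fixes x u v :: "'a::field"
  assumes "x \<noteq> 0" "u \<noteq> 0" "v \<noteq> 0"
  shows "v * (x * (x + 3) / (u * v)) / x = (x + 3) / u"
  using assms by (simp add: field_simps)

lemma alg_main:
  fixes f1 f2 f3 f4 A :: rf
  assumes s1: "shift 2 f1 = f1 - 2"
    and f3: "f3 \<noteq> 0"
    and eR1: "shift 2 f3 * shift 2 f2 * f1 / (hvar + 4) = f2 * shift 2 f3 * (f1 + 2) / (hvar + 2)"
    and A: "A = shift 2 f3 * f4 * (f1 * (f1 + 1) * (f1 + 2))"
    and eA0: "(- hvar / cfun hvar) * A = f1 * (f1 * (f1 + 1) * (f1 + 2))"
    and eA2: "(inverse (hvar * (hvar + 2)^2) / cfun hvar) * A + inverse (hvar + 2) ^ 2 * (f2 * f2 * ((f1 + 1) * (f1 + 2))) = 0"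
  shows "\<exists>\<beta> \<gamma>. \<beta> \<in> {1, -1} \<and> \<gamma> \<noteq> 0 \<and>
                 f1 = - hvar - 2 \<and>
                 f2 = \<beta> * (hvar + 2) / hvar \<and>
                 f3 = 1 / ((hvar - 1) * \<gamma>) \<and>
                 f4 = (hvar + 3) * shift 2 \<gamma>"
proof -
  note fn = f1_ne[OF s1]
  note hn = hvar_ne
  have cn: "cfun hvar \<noteq> 0" using cfun_nz[of 0] by (simp add: xn_def)
  have c_eq: "cfun hvar = hvar * (hvar + 3) / ((hvar + 1) * (hvar + 2))" by (simp add: cfun_def)
  define Q1 where "Q1 = (f1 + 1) * (f1 + 2)"
  have Q1n: "Q1 \<noteq> 0" using fn by (simp add: Q1_def)
  have eA0': "(- hvar / cfun hvar) * A = f1 * (f1 * Q1)" using eA0 by (simp add: Q1_def mult.assoc)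
  have A': "A = - (f1 * (f1 * Q1) * cfun hvar / hvar)"
  proof -
    have "A = (- hvar / cfun hvar) * A * (- cfun hvar / hvar)" using hn cn by (simp add: field_simps)
    thus ?thesis unfolding eA0' by simp
  qed
  have "(f2 * f2 * Q1) * (hvar * hvar) = f1 * (f1 * Q1)"
  proof (rule gen_alg1)
    show "(inverse (hvar * (hvar + 2)^2) / cfun hvar) * (- (f1 * (f1 * Q1) * cfun hvar / hvar))
          + inverse (hvar + 2) ^ 2 * (f2 * f2 * Q1) = 0"
      using eA2 A' by (simp add: Q1_def)
  qed (use hn cn in auto)
  hence "Q1 * (f2 * f2 * (hvar * hvar) - f1 * f1) = 0" by (simp add: algebra_simps)
  hence "f2 * f2 * (hvar * hvar) = f1 * f1" using Q1n by simp
  hence "f2 * f2 = (f1 / hvar) * (f1 / hvar)" using hn by (simp add: field_simps)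
  hence "(f2 - f1 / hvar) * (f2 + f1 / hvar) = 0" by (simp add: algebra_simps)
  hence "f2 = f1 / hvar \<or> f2 = - (f1 / hvar)" by (auto simp: eq_neg_iff_add_eq_0)
  then obtain \<epsilon> :: rf where eps: "\<epsilon> \<in> {1, -1}" and f2e: "f2 = \<epsilon> * (f1 / hvar)"
  proof
    assume "f2 = f1 / hvar" thus ?thesis using that[of 1] by simp
  next
    assume "f2 = - (f1 / hvar)" thus ?thesis using that[of "-1"] by simp
  qed
  have en: "\<epsilon> \<noteq> 0" using eps by auto
  have sf2: "shift 2 f2 = \<epsilon> * ((f1 - 2) / (hvar + 2))"
    using f2e eps s1 by (auto simp: shift_mult shift_divide shift_hvar shift_1 shift_uminus)
  have s3: "shift 2 f3 \<noteq> 0" using f3 by (simp add: shift_eq_0)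
  have "(f1 - 2) * hvar = (f1 + 2) * (hvar + 4)"
  proof -
    have "shift 2 f3 * (\<epsilon> * ((f1 - 2) / (hvar + 2))) * f1 / (hvar + 4)
        = \<epsilon> * (f1 / hvar) * shift 2 f3 * (f1 + 2) / (hvar + 2)"
      using eR1 sf2 f2e by simp
    hence "shift 2 f3 * \<epsilon> * f1 * ((f1 - 2) * hvar - (f1 + 2) * (hvar + 4)) = 0"
      using hn by (intro gen_alg2[of _ "hvar + 2"]) auto
    thus ?thesis using s3 en fn by simp
  qed
  hence "4 * (f1 - (- hvar - 2)) = 0" by (simp add: algebra_simps)
  hence f1e: "f1 = - hvar - 2" using mult_eq_0_iff[of "4::rf" "f1 - (- hvar - 2)"] by (simp only: right_minus_eq) simp
  define \<beta> where "\<beta> = - \<epsilon>"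
  have "\<beta> \<in> {1, -1}" using eps by (auto simp: \<beta>_def)
  moreover have "f2 = \<beta> * (hvar + 2) / hvar" using f2e f1e by (simp add: \<beta>_def field_simps)
  moreover define \<gamma> where "\<gamma> = inverse ((hvar - 1) * f3)"
  have gn: "\<gamma> \<noteq> 0" using f3 hn by (simp add: \<gamma>_def)
  moreover have "f3 = 1 / ((hvar - 1) * \<gamma>)"
  proof -
    have "(hvar - 1) * \<gamma> = inverse f3"
      unfolding \<gamma>_def inverse_mult_distrib mult.assoc[symmetric] using hn(6) by simp
    thus ?thesis by (simp add: divide_inverse)
  qed
  moreover have "f4 = (hvar + 3) * shift 2 \<gamma>"
  proof -
    have P0: "f1 * Q1 \<noteq> 0" using fn Q1n by simp
    have "shift 2 f3 * f4 * (f1 * Q1) = A" by (simp add: A Q1_def mult.assoc)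
    also have "\<dots> = (- (f1 * cfun hvar / hvar)) * (f1 * Q1)" unfolding A' by (simp add: divide_inverse mult_ac)
    finally have K: "shift 2 f3 * f4 = - (f1 * cfun hvar / hvar)" using P0 by (metis mult_cancel_right)
    have "- (f1 * cfun hvar / hvar) = (hvar + 2) * cfun hvar / hvar"
      unfolding f1e using hn by (simp add: field_simps)
    also have "\<dots> = (hvar + 3) / (hvar + 1)"
      unfolding c_eq using gen_alg3[of hvar "hvar + 1" "hvar + 2"] hn by simp
    finally have "- (f1 * cfun hvar / hvar) = (hvar + 3) / (hvar + 1)" .
    hence K': "shift 2 f3 * f4 = (hvar + 3) / (hvar + 1)" using K by simp
    have sg: "shift 2 \<gamma> = inverse ((hvar + 1) * shift 2 f3)"
      by (simp add: \<gamma>_def shift_inverse shift_mult shift_diff shift_hvar shift_1 add.assoc)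
    have "f4 = (shift 2 f3 * f4) * inverse (shift 2 f3)" using s3 by simp
    also have "\<dots> = (hvar + 3) * inverse ((hvar + 1) * shift 2 f3)"
      unfolding K' by (simp add: divide_inverse inverse_mult_distrib mult_ac)
    finally show ?thesis using sg by simp
  qed
  ultimately show ?thesis using f1e by blast
qed



definition PR :: "(_ \<Rightarrow> _) \<Rightarrow> rf \<Rightarrow> rf \<Rightarrow> bool" where
  "PR \<phi> a a' \<longleftrightarrow> a \<in> Ubar \<and> a' \<in> Ubar \<and> \<phi> (M [] a) = M [] a'"

lemma M_Nil_mult: "a \<in> Ubar \<Longrightarrow> b \<in> Ubar \<Longrightarrow> M [] a \<otimes>\<^bsub>DR\<^esub> M [] b = M [] (a * b)"
  by (simp add: M_mult)

lemma phi_mult: "\<phi> \<in> ring_hom DR DR \<Longrightarrow> f \<in> Ubar \<Longrightarrow> g \<in> Ubar \<Longrightarrow>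
   \<phi> (M u f \<otimes>\<^bsub>DR\<^esub> M v g) = \<phi> (M u f) \<otimes>\<^bsub>DR\<^esub> \<phi> (M v g)"
  by (rule ring_hom_mult) (auto intro: cls_carrier mono_carrier)

lemma phi_add: "\<phi> \<in> ring_hom DR DR \<Longrightarrow> f \<in> Ubar \<Longrightarrow> g \<in> Ubar \<Longrightarrow>
   \<phi> (M u f \<oplus>\<^bsub>DR\<^esub> M v g) = \<phi> (M u f) \<oplus>\<^bsub>DR\<^esub> \<phi> (M v g)"
  by (rule ring_hom_add) (auto intro: cls_carrier mono_carrier)

lemma PR_mult: "\<phi> \<in> ring_hom DR DR \<Longrightarrow> PR \<phi> a a' \<Longrightarrow> PR \<phi> b b' \<Longrightarrow> PR \<phi> (a * b) (a' * b')"
  unfolding PR_def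
  by (metis M_Nil_mult phi_mult Ubar_mult)

lemma PR_add: "\<phi> \<in> ring_hom DR DR \<Longrightarrow> PR \<phi> a a' \<Longrightarrow> PR \<phi> b b' \<Longrightarrow> PR \<phi> (a + b) (a' + b')"
  unfolding PR_def
  by (metis M_add phi_add Ubar_add)

lemma cst_numeral: "cst (numeral n) = numeral n"
  by (simp add: cst_def P_numeral[symmetric] numeral_poly)

lemma cst_one: "cst 1 = 1" by (simp add: cst_def One_fract_def one_pCons)
lemma cst_zero: "cst 0 = 0" by (simp add: cst_def Zero_fract_def)

lemma PR_num: "\<forall>c. \<phi> (M [] (cst c)) = M [] (cst c) \<Longrightarrow> PR \<phi> (numeral n) (numeral n)"
  unfolding PR_def by (metis cst_numeral Ubar_numeral)

lemma PR_one: "\<forall>c. \<phi> (M [] (cst c)) = M [] (cst c) \<Longrightarrow> PR \<phi> 1 1"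
  unfolding PR_def by (metis cst_one Ubar_1)

lemma PR_zero: "\<forall>c. \<phi> (M [] (cst c)) = M [] (cst c) \<Longrightarrow> PR \<phi> 0 0"
  unfolding PR_def by (metis cst_zero Ubar_0)

abbreviation d10 :: vec where "d10 \<equiv> (\<lambda>n k. if n = 1 \<and> k = 0 then 1 else 0)"
abbreviation d00 :: vec where "d00 \<equiv> (\<lambda>n k. if n = 0 \<and> k = 0 then 1 else 0)"

lemma ev0: "ev 0 g = g" by (simp add: ev_def)
lemma ev1: "ev 1 g = shift 2 g" by (simp add: ev_def)

lemma pp1: "pp 1 = - hvar / cfun hvar" by (simp add: pp.simps(2) xn_def)
lemma qq1: "qq 1 = inverse (hvar * (hvar + 2)^2) / cfun hvar" by (simp add: qq.simps(2) xn_def)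
lemma pp1_nz: "pp 1 \<noteq> 0" using cfun_nz[of 0] hvar_nz by (simp add: pp.simps(2) xn_def)

lemma test_Zm: "Wop [Zm] (Dop g d10) 0 0 = pp 1 * shift 2 g" by (simp add: Dop_ev ev_def)
lemma test_ZmT: "Wop [Zm, T] (Dop g d10) 0 1 = pp 1 * inverse (hvar + 4) * shift 2 g"
  by (simp add: Dop_ev ev_def xn_def)
lemma test_TZm: "Wop [T, Zm] (Dop g d10) 0 1 = inverse (hvar + 2) * pp 1 * shift 2 g"
  by (simp add: Dop_ev ev_def xn_def)
lemma test_ZmZp0: "Wop [Zm, Zp] (Dop g d00) 0 0 = pp 1 * g" by (simp add: Dop_ev ev_def)
lemma test_ZmZp2: "Wop [Zm, Zp] (Dop g d00) 0 2 = qq 1 * g" by (simp add: Dop_ev ev_def)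
lemma test_TT0: "Wop [T, T] (Dop g d00) 0 0 = 0" by (simp add: Dop_ev)
lemma test_TT2: "Wop [T, T] (Dop g d00) 0 2 = inverse (hvar + 2) ^ 2 * g"
  by (simp add: Dop_ev ev_def xn_def numeral_2_eq_2 power2_eq_square)
lemma test_Nil0: "Wop [] (Dop g d00) 0 0 = g" by (simp add: Dop_ev ev_def)
lemma test_Nil2: "Wop [] (Dop g d00) 0 2 = 0" by (simp add: Dop_ev)
lemma test_ZpZm: "Wop [Zp, Zm] (Dop g d00) 0 k = 0" by (simp add: Dop_ev)

lemma rho_cong: "x \<in> carrier FA \<Longrightarrow> y \<in> carrier FA \<Longrightarrow> cls x = cls y \<Longrightarrow> rho x m n k = rho y m n k"
  using cls_eq_rho by metis

lemma M_rho: "M u f = M v g \<Longrightarrow> f \<in> Ubar \<Longrightarrow> g \<in> Ubar \<Longrightarrow> Wop u (Dop f m) n k = Wop v (Dop g m) n k"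
  using rho_cong[of "mono u f" "mono v g" m n k] by (simp add: mono_carrier rho_mono)

lemma rho2: "f \<in> Ubar \<Longrightarrow> g \<in> Ubar \<Longrightarrow>
   rho (\<lambda>w. mono u f w + mono v g w) m n k = Wop u (Dop f m) n k + Wop v (Dop g m) n k"
  using rho_add[of "mono u f" "mono v g" m] mono_carrier[of f u] mono_carrier[of g v]
  by (simp add: carrier_FA rho_mono vadd_def)

lemma cls2: "f \<in> Ubar \<Longrightarrow> g \<in> Ubar \<Longrightarrow>
   cls (\<lambda>w. mono u f w + mono v g w) = M u f \<oplus>\<^bsub>DR\<^esub> M v g"
  by (simp add: cls_add mono_carrier)

lemma carrier2: "f \<in> Ubar \<Longrightarrow> g \<in> Ubar \<Longrightarrow> (\<lambda>w. mono u f w + mono v g w) \<in> carrier FA"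
  using ring.ring_simprules(1)[OF ring_FA, of "mono u f" "mono v g"] mono_carrier[of f u] mono_carrier[of g v]
  by (simp add: add_FA)

lemma rel_in_DR: "r \<in> rels \<Longrightarrow> r \<in> DRideal"
  using ring.genideal_self[OF ring_FA rels_carrier] by (auto simp: DRideal_def)

lemma DR_rmult: "r \<in> DRideal \<Longrightarrow> g \<in> Ubar \<Longrightarrow> (\<lambda>w. r w * g) \<in> DRideal"
  using ideal.I_r_closed[OF ideal_DR, of r "mono [] g"] mono_carrier[of g "[]"]
  by (simp add: mult_FA fmult_mono_Nil_right)

lemma gen_alg4:
  fixes x u v :: "'a::field"
  assumes "u \<noteq> 0" "v \<noteq> 0"
  shows "x * (x + 3) / (u * v) * (x * u * v) = x * x * (x + 3)"
  using assms by (simp add: field_simps)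

lemma gen_alg5:
  fixes x y :: "'a::field"
  assumes "x \<noteq> 0"
  shows "1 / x * (x * y) = y"
  using assms by (simp add: field_simps)

lemma C1: "M [Zp, T] (hvar + 2) = M [T, Zp] (hvar + 4)"
proof (rule cls_eqI)
  show "mono [Zp, T] (hvar + 2) \<in> carrier FA" "mono [T, Zp] (hvar + 4) \<in> carrier FA"
    by (auto intro!: mono_carrier Ubar_add Ubar_hvar Ubar_numeral)
  have "(\<lambda>w. rel1 w * (hvar + 2)) \<in> DRideal"
    by (rule DR_rmult) (auto intro!: rel_in_DR Ubar_add Ubar_hvar Ubar_numeral simp: rels_eq)
  moreover have "(\<lambda>w. rel1 w * (hvar + 2)) = (\<lambda>w. mono [Zp, T] (hvar + 2) w - mono [T, Zp] (hvar + 4) w)"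
    using hvar_ne by (auto simp: rel1_def mono_apply)
  ultimately show "(\<lambda>w. mono [Zp, T] (hvar + 2) w - mono [T, Zp] (hvar + 4) w) \<in> DRideal" by simp
qed

definition Pp :: rf where "Pp = hvar * (hvar + 1) * (hvar + 2)"
definition Qp :: rf where "Qp = (hvar + 1) * (hvar + 2)"
definition Rp :: rf where "Rp = hvar * hvar * (hvar + 3)"

lemma Ubar_PQR: "Pp \<in> Ubar" "Qp \<in> Ubar" "Rp \<in> Ubar" "hvar * Pp \<in> Ubar"
  unfolding Pp_def Qp_def Rp_def by (intro Ubar_mult Ubar_add Ubar_hvar Ubar_numeral Ubar_1)+

lemma C2: "cls (\<lambda>w. mono [Zp, Zm] Pp w + mono [T, T] Qp w) = cls (\<lambda>w. mono [] (hvar * Pp) w + mono [Zm, Zp] Rp w)"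
proof (rule cls_eqI)
  show "(\<lambda>w. mono [Zp, Zm] Pp w + mono [T, T] Qp w) \<in> carrier FA"
       "(\<lambda>w. mono [] (hvar * Pp) w + mono [Zm, Zp] Rp w) \<in> carrier FA"
    by (auto intro!: carrier2 Ubar_PQR)
  have "(\<lambda>w. rel2 w * Pp) \<in> DRideal"
    by (rule DR_rmult) (auto intro!: rel_in_DR Ubar_PQR simp: rels_eq)
  moreover have "(\<lambda>w. rel2 w * Pp) = (\<lambda>w. (mono [Zp, Zm] Pp w + mono [T, T] Qp w) - (mono [] (hvar * Pp) w + mono [Zm, Zp] Rp w))"
  proof
    fix w
    have a: "c2 * Pp = Rp" unfolding c2_def Pp_def Rp_def
      using gen_alg4[of "hvar + 1" "hvar + 2" hvar] hvar_ne by (simp add: mult_ac)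
    have b: "1 / hvar * Pp = Qp" unfolding Pp_def Qp_def
      using gen_alg5[of hvar "(hvar + 1) * (hvar + 2)"] hvar_ne by (simp add: mult_ac)
    show "rel2 w * Pp = (mono [Zp, Zm] Pp w + mono [T, T] Qp w) - (mono [] (hvar * Pp) w + mono [Zm, Zp] Rp w)"
      unfolding rel2_eq mono_apply using a b by (auto simp: algebra_simps)
  qed
  ultimately show "(\<lambda>w. (mono [Zp, Zm] Pp w + mono [T, T] Qp w) - (mono [] (hvar * Pp) w + mono [Zm, Zp] Rp w)) \<in> DRideal"
    by simp
qed

lemma forward:
  assumes U: "f1 \<in> Ubar" "f2 \<in> Ubar" "f3 \<in> Ubar" "f4 \<in> Ubar"
    and hom: "\<phi> \<in> ring_hom DR DR" and inj: "inj_on \<phi> (carrier DR)"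
    and cst: "\<forall>c. \<phi> (M [] (cst c)) = M [] (cst c)"
    and e1: "\<phi> (M [] hvar) = M [] f1" and e2: "\<phi> (M [T] 1) = M [T] f2"
    and e3: "\<phi> (M [Zp] 1) = M [Zm] f3" and e4: "\<phi> (M [Zm] 1) = M [Zp] f4"
  shows "\<exists>\<beta> \<gamma>. \<beta> \<in> {1, -1} \<and> \<gamma> \<noteq> 0 \<and>
                 f1 = - hvar - 2 \<and>
                 f2 = \<beta> * (hvar + 2) / hvar \<and>
                 f3 = 1 / ((hvar - 1) * \<gamma>) \<and>
                 f4 = (hvar + 3) * shift 2 \<gamma>"
proof -
  have PRh: "PR \<phi> hvar f1" using e1 U by (simp add: PR_def Ubar_hvar)
  note PRn = PR_num[OF cst] and PR1 = PR_one[OF cst]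
  note PRm = PR_mult[OF hom] and PRa = PR_add[OF hom]
  note Ub = U Ubar_hvar Ubar_1 Ubar_0 Ubar_numeral Ubar_mult Ubar_add Ubar_shift
  have f3: "f3 \<noteq> 0"
  proof
    assume f30: "f3 = 0"
    have "\<phi> (M [Zp] 1 \<otimes>\<^bsub>DR\<^esub> M [] 0) = M [Zm] f3 \<otimes>\<^bsub>DR\<^esub> M [] 0"
      using phi_mult[OF hom] e3 PR_zero[OF cst] by (simp add: PR_def Ubar_1 Ubar_0)
    hence "\<phi> (M [Zp] 0) = \<phi> (M [Zp] 1)" using f30 e3 Ub by (simp add: M_mult shift_0)
    hence "M [Zp] 0 = M [Zp] 1"
      using inj by (simp add: inj_on_def cls_carrier mono_carrier Ubar_0 Ubar_1)
    hence "Wop [Zp] (Dop 0 d00) 1 0 = Wop [Zp] (Dop 1 d00) 1 0"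
      by (rule M_rho[OF _ Ubar_0 Ubar_1])
    thus False by (simp add: Dop_ev)
  qed
  have s1: "shift 2 f1 = f1 - 2"
  proof -
    have W0: "M [] hvar \<otimes>\<^bsub>DR\<^esub> M [Zp] 1 = M [Zp] 1 \<otimes>\<^bsub>DR\<^esub> M [] (hvar + 2)"
      using Ub by (simp add: M_mult shift_hvar shift_1 Ubar_numeral Ubar_add)
    have PR2: "PR \<phi> (hvar + 2) (f1 + 2)" using PRa[OF PRh PRn] .
    have "M [] f1 \<otimes>\<^bsub>DR\<^esub> M [Zm] f3 = M [Zm] f3 \<otimes>\<^bsub>DR\<^esub> M [] (f1 + 2)"
      using arg_cong[OF W0, of \<phi>] phi_mult[OF hom] e1 e3 PR2 Ub by (simp add: PR_def)
    hence "M [Zm] (shift (-2) f1 * f3) = M [Zm] (f3 * (f1 + 2))"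
      using Ub by (simp add: M_mult)
    hence "Wop [Zm] (Dop (shift (-2) f1 * f3) d10) 0 0 = Wop [Zm] (Dop (f3 * (f1 + 2)) d10) 0 0"
      by (rule M_rho) (use Ub in auto)
    hence "pp 1 * (shift 2 (shift (-2) f1 * f3)) = pp 1 * shift 2 (f3 * (f1 + 2))"
      unfolding test_Zm .
    hence "f1 * shift 2 f3 = shift 2 f3 * (shift 2 f1 + 2)"
      using pp1_nz by (simp add: shift_mult shift_shift shift_add shift_numeral)
    hence "shift 2 f3 * f1 = shift 2 f3 * (shift 2 f1 + 2)" by (simp add: mult.commute)
    moreover have "shift 2 f3 \<noteq> 0" using f3 by (simp add: shift_eq_0)
    ultimately have "f1 = shift 2 f1 + 2" by simp
    thus ?thesis by (simp add: algebra_simps)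
  qed
  have s3: "shift 2 f3 \<noteq> 0" using f3 by (simp add: shift_eq_0)
  have gZpT: "\<phi> (M [Zp, T] 1) = M [Zm, T] (f3 * f2)"
  proof -
    have "M [Zp, T] 1 = M [Zp] 1 \<otimes>\<^bsub>DR\<^esub> M [T] 1" using Ub by (simp add: M_mult shift_1)
    hence "\<phi> (M [Zp, T] 1) = M [Zm] f3 \<otimes>\<^bsub>DR\<^esub> M [T] f2" using phi_mult[OF hom] e2 e3 Ub by simp
    thus ?thesis using Ub by (simp add: M_mult)
  qed
  have gTZp: "\<phi> (M [T, Zp] 1) = M [T, Zm] (shift (-2) f2 * f3)"
  proof -
    have "M [T, Zp] 1 = M [T] 1 \<otimes>\<^bsub>DR\<^esub> M [Zp] 1" using Ub by (simp add: M_mult shift_1)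
    hence "\<phi> (M [T, Zp] 1) = M [T] f2 \<otimes>\<^bsub>DR\<^esub> M [Zm] f3" using phi_mult[OF hom] e2 e3 Ub by simp
    thus ?thesis using Ub by (simp add: M_mult)
  qed
  have gZpZm: "\<phi> (M [Zp, Zm] 1) = M [Zm, Zp] (shift 2 f3 * f4)"
  proof -
    have "M [Zp, Zm] 1 = M [Zp] 1 \<otimes>\<^bsub>DR\<^esub> M [Zm] 1" using Ub by (simp add: M_mult shift_1)
    hence "\<phi> (M [Zp, Zm] 1) = M [Zm] f3 \<otimes>\<^bsub>DR\<^esub> M [Zp] f4" using phi_mult[OF hom] e4 e3 Ub by simp
    thus ?thesis using Ub by (simp add: M_mult)
  qed
  have gZmZp: "\<phi> (M [Zm, Zp] 1) = M [Zp, Zm] (shift (-2) f4 * f3)"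
  proof -
    have "M [Zm, Zp] 1 = M [Zm] 1 \<otimes>\<^bsub>DR\<^esub> M [Zp] 1" using Ub by (simp add: M_mult shift_1)
    hence "\<phi> (M [Zm, Zp] 1) = M [Zp] f4 \<otimes>\<^bsub>DR\<^esub> M [Zm] f3" using phi_mult[OF hom] e4 e3 Ub by simp
    thus ?thesis using Ub by (simp add: M_mult)
  qed
  have gTT: "\<phi> (M [T, T] 1) = M [T, T] (f2 * f2)"
  proof -
    have "M [T, T] 1 = M [T] 1 \<otimes>\<^bsub>DR\<^esub> M [T] 1" using Ub by (simp add: M_mult shift_1)
    hence "\<phi> (M [T, T] 1) = M [T] f2 \<otimes>\<^bsub>DR\<^esub> M [T] f2" using phi_mult[OF hom] e2 Ub by simp
    thus ?thesis using Ub by (simp add: M_mult)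
  qed
  have gen: "\<phi> (M w a) = M w' (c * a')" if g: "\<phi> (M w 1) = M w' c" and p: "PR \<phi> a a'" and c: "c \<in> Ubar" for w w' c a a'
  proof -
    have "M w a = M w 1 \<otimes>\<^bsub>DR\<^esub> M [] a" using p by (simp add: PR_def M_mult shift_1 Ubar_1)
    hence "\<phi> (M w a) = M w' c \<otimes>\<^bsub>DR\<^esub> M [] a'" using phi_mult[OF hom, of 1 a w "[]"] g p
      by (simp add: PR_def Ubar_1)
    thus ?thesis using p c by (simp add: PR_def M_mult)
  qed
  have cZmT: "f3 * f2 \<in> Ubar" "shift (-2) f2 * f3 \<in> Ubar" "shift 2 f3 * f4 \<in> Ubar"
     "shift (-2) f4 * f3 \<in> Ubar" "f2 * f2 \<in> Ubar" using Ub by auto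
  have eR1: "shift 2 f3 * shift 2 f2 * f1 / (hvar + 4) = f2 * shift 2 f3 * (f1 + 2) / (hvar + 2)"
  proof -
    have "\<phi> (M [Zp, T] (hvar + 2)) = M [Zm, T] (f3 * f2 * (f1 + 2))"
      by (rule gen[OF gZpT PRa[OF PRh PRn] cZmT(1)])
    moreover have "\<phi> (M [T, Zp] (hvar + 4)) = M [T, Zm] (shift (-2) f2 * f3 * (f1 + 4))"
      by (rule gen[OF gTZp PRa[OF PRh PRn] cZmT(2)])
    ultimately have "M [Zm, T] (f3 * f2 * (f1 + 2)) = M [T, Zm] (shift (-2) f2 * f3 * (f1 + 4))"
      using C1 by simp
    hence "Wop [Zm, T] (Dop (f3 * f2 * (f1 + 2)) d10) 0 1 = Wop [T, Zm] (Dop (shift (-2) f2 * f3 * (f1 + 4)) d10) 0 1"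
      by (rule M_rho) (use Ub in auto)
    hence "pp 1 * inverse (hvar + 4) * shift 2 (f3 * f2 * (f1 + 2)) = inverse (hvar + 2) * pp 1 * shift 2 (shift (-2) f2 * f3 * (f1 + 4))"
      unfolding test_ZmT test_TZm .
    moreover have "shift 2 (f3 * f2 * (f1 + 2)) = shift 2 f3 * shift 2 f2 * f1"
      using s1 by (simp add: shift_mult shift_add shift_numeral)
    moreover have "shift 2 (shift (-2) f2 * f3 * (f1 + 4)) = f2 * shift 2 f3 * (f1 + 2)"
      using s1 by (simp add: shift_mult shift_add shift_numeral shift_shift)
    ultimately have "pp 1 * (shift 2 f3 * shift 2 f2 * f1 / (hvar + 4)) = pp 1 * (f2 * shift 2 f3 * (f1 + 2) / (hvar + 2))"
      by (simp add: divide_inverse mult_ac)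
    thus ?thesis by (simp only: mult_left_cancel[OF pp1_nz])
  qed
  define Pp' where "Pp' = f1 * (f1 + 1) * (f1 + 2)"
  define Qp' where "Qp' = (f1 + 1) * (f1 + 2)"
  define Rp' where "Rp' = f1 * f1 * (f1 + 3)"
  have PRP: "PR \<phi> Pp Pp'" unfolding Pp_def Pp'_def by (intro PRm PRa PRh PRn PR1)
  have PRQ: "PR \<phi> Qp Qp'" unfolding Qp_def Qp'_def by (intro PRm PRa PRh PRn PR1)
  have PRR: "PR \<phi> Rp Rp'" unfolding Rp_def Rp'_def by (intro PRm PRa PRh PRn PR1)
  have PRhP: "PR \<phi> (hvar * Pp) (f1 * Pp')" by (intro PRm PRh PRP)
  have UP: "Pp' \<in> Ubar" "Qp' \<in> Ubar" "Rp' \<in> Ubar" "f1 * Pp' \<in> Ubar"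
    using PRP PRQ PRR PRhP by (auto simp: PR_def)
  let ?a = "shift 2 f3 * f4 * Pp'" and ?b = "f2 * f2 * Qp'" and ?c = "f1 * Pp'" and ?d = "shift (-2) f4 * f3 * Rp'"
  have Uabcd: "?a \<in> Ubar" "?b \<in> Ubar" "?c \<in> Ubar" "?d \<in> Ubar" using Ub UP by auto
  have L: "\<phi> (cls (\<lambda>w. mono [Zp, Zm] Pp w + mono [T, T] Qp w)) = cls (\<lambda>w. mono [Zm, Zp] ?a w + mono [T, T] ?b w)"
  proof -
    have "\<phi> (cls (\<lambda>w. mono [Zp, Zm] Pp w + mono [T, T] Qp w)) = \<phi> (M [Zp, Zm] Pp) \<oplus>\<^bsub>DR\<^esub> \<phi> (M [T, T] Qp)"
      using Ubar_PQR by (simp add: cls2 phi_add[OF hom])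
    also have "\<dots> = M [Zm, Zp] ?a \<oplus>\<^bsub>DR\<^esub> M [T, T] ?b"
      using gen[OF gZpZm PRP cZmT(3)] gen[OF gTT PRQ cZmT(5)] by simp
    finally show ?thesis using Uabcd by (simp add: cls2)
  qed
  have R: "\<phi> (cls (\<lambda>w. mono [] (hvar * Pp) w + mono [Zm, Zp] Rp w)) = cls (\<lambda>w. mono [] ?c w + mono [Zp, Zm] ?d w)"
  proof -
    have "\<phi> (cls (\<lambda>w. mono [] (hvar * Pp) w + mono [Zm, Zp] Rp w)) = \<phi> (M [] (hvar * Pp)) \<oplus>\<^bsub>DR\<^esub> \<phi> (M [Zm, Zp] Rp)"
      using Ubar_PQR by (simp add: cls2 phi_add[OF hom])
    also have "\<dots> = M [] ?c \<oplus>\<^bsub>DR\<^esub> M [Zp, Zm] ?d"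
      using gen[OF gZmZp PRR cZmT(4)] PRhP by (simp add: PR_def)
    finally show ?thesis using Uabcd by (simp add: cls2)
  qed
  have LR: "cls (\<lambda>w. mono [Zm, Zp] ?a w + mono [T, T] ?b w) = cls (\<lambda>w. mono [] ?c w + mono [Zp, Zm] ?d w)"
    using L R C2 by simp
  have RC: "rho (\<lambda>w. mono [Zm, Zp] ?a w + mono [T, T] ?b w) d00 0 k = rho (\<lambda>w. mono [] ?c w + mono [Zp, Zm] ?d w) d00 0 k" for k
    by (rule rho_cong[OF carrier2 carrier2 LR]) (use Uabcd in auto)
  have eq0: "pp 1 * ?a = ?c"
    using RC[of 0] unfolding rho2[OF Uabcd(1) Uabcd(2)] rho2[OF Uabcd(3) Uabcd(4)] test_ZmZp0 test_TT0 test_Nil0 test_ZpZm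
    by simp
  have eq2: "qq 1 * ?a + inverse (hvar + 2) ^ 2 * ?b = 0"
    using RC[of 2] unfolding rho2[OF Uabcd(1) Uabcd(2)] rho2[OF Uabcd(3) Uabcd(4)] test_ZmZp2 test_TT2 test_Nil2 test_ZpZm
    by simp
  show ?thesis
  proof (rule alg_main[OF s1 f3 eR1 refl])
    show "- hvar / cfun hvar * (shift 2 f3 * f4 * (f1 * (f1 + 1) * (f1 + 2))) = f1 * (f1 * (f1 + 1) * (f1 + 2))"
      using eq0 unfolding pp1 Pp'_def .
    show "inverse (hvar * (hvar + 2)\<^sup>2) / cfun hvar * (shift 2 f3 * f4 * (f1 * (f1 + 1) * (f1 + 2))) +
        (inverse (hvar + 2))\<^sup>2 * (f2 * f2 * ((f1 + 1) * (f1 + 2))) = 0"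
      using eq2 unfolding qq1 Pp'_def Qp'_def .
  qed
qed



fun swap :: "gen \<Rightarrow> gen" where
  "swap Zp = Zm" | "swap Zm = Zp" | "swap T = T"

lemma swap_swap[simp]: "swap (swap g) = g" by (cases g) simp_all
lemma gwt_swap[simp]: "gwt (swap g) = - gwt g" by (cases g) simp_all
lemma swap_comp[simp]: "swap \<circ> swap = id" by (rule ext) simp
lemma map_swap_swap[simp]: "map swap (map swap w) = w" by (induct w) simp_all
lemma wt_swap[simp]: "wt (map swap w) = - wt w" by (induct w) simp_all

definition cT :: "rf \<Rightarrow> rf" where "cT \<beta> = \<beta> * (hvar + 2) / hvar"
definition cP :: "rf \<Rightarrow> rf" where "cP \<gamma> = 1 / ((hvar - 1) * \<gamma>)"
definition cM :: "rf \<Rightarrow> rf" where "cM \<gamma> = (hvar + 3) * shift 2 \<gamma>"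

fun coef :: "rf \<Rightarrow> rf \<Rightarrow> gen \<Rightarrow> rf" where
  "coef \<beta> \<gamma> T = cT \<beta>" | "coef \<beta> \<gamma> Zp = cP \<gamma>" | "coef \<beta> \<gamma> Zm = cM \<gamma>"

fun C :: "rf \<Rightarrow> rf \<Rightarrow> gen list \<Rightarrow> rf" where
  "C \<beta> \<gamma> [] = 1"
| "C \<beta> \<gamma> (g # w) = shift (- wt w) (coef \<beta> \<gamma> g) * C \<beta> \<gamma> w"

definition Phi :: "rf \<Rightarrow> rf \<Rightarrow> (gen list \<Rightarrow> rf) \<Rightarrow> (gen list \<Rightarrow> rf)" where
  "Phi \<beta> \<gamma> a = (\<lambda>v. C \<beta> \<gamma> (map swap v) * sig (a (map swap v)))"

lemma C_append: "C \<beta> \<gamma> (u @ w) = shift (- wt w) (C \<beta> \<gamma> u) * C \<beta> \<gamma> w"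
  by (induct u) (simp_all add: shift_1 shift_mult shift_shift mult_ac add.commute)

lemma sig_sum: "sig (sum f A) = (\<Sum>x\<in>A. sig (f x))"
  by (induct A rule: infinite_finite_induct) (simp_all add: sig_0 sig_add)

lemma Phi_mult: "Phi \<beta> \<gamma> (fmult a b) = fmult (Phi \<beta> \<gamma> a) (Phi \<beta> \<gamma> b)"
proof
  fix v
  let ?s = "map swap v"
  have "Phi \<beta> \<gamma> (fmult a b) v
     = (\<Sum>i\<in>{0..length v}. C \<beta> \<gamma> ?s * sig (shift (wt (drop i ?s)) (a (take i ?s)) * b (drop i ?s)))"
    by (simp add: Phi_def fmult_def sig_sum sum_distrib_left)
  also have "\<dots> = (\<Sum>i\<in>{0..length v}. shift (wt (drop i v)) (Phi \<beta> \<gamma> a (take i v)) * Phi \<beta> \<gamma> b (drop i v))"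
  proof (rule sum.cong[OF refl])
    fix i
    have d: "drop i ?s = map swap (drop i v)" "take i ?s = map swap (take i v)" by (simp_all add: drop_map take_map)
    have "C \<beta> \<gamma> ?s = C \<beta> \<gamma> (take i ?s @ drop i ?s)" by (simp only: append_take_drop_id)
    also have "\<dots> = shift (- wt (drop i ?s)) (C \<beta> \<gamma> (take i ?s)) * C \<beta> \<gamma> (drop i ?s)" by (rule C_append)
    finally have "C \<beta> \<gamma> ?s = shift (wt (drop i v)) (C \<beta> \<gamma> (take i ?s)) * C \<beta> \<gamma> (drop i ?s)"
      using d by simp
    thus "C \<beta> \<gamma> ?s * sig (shift (wt (drop i ?s)) (a (take i ?s)) * b (drop i ?s))
        = shift (wt (drop i v)) (Phi \<beta> \<gamma> a (take i v)) * Phi \<beta> \<gamma> b (drop i v)"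
      using d by (simp add: Phi_def sig_mult sig_shift shift_mult mult_ac)
  qed
  also have "\<dots> = fmult (Phi \<beta> \<gamma> a) (Phi \<beta> \<gamma> b) v" by (simp add: fmult_def)
  finally show "Phi \<beta> \<gamma> (fmult a b) v = fmult (Phi \<beta> \<gamma> a) (Phi \<beta> \<gamma> b) v" .
qed

lemma Phi_add: "Phi \<beta> \<gamma> (\<lambda>w. a w + b w) = (\<lambda>w. Phi \<beta> \<gamma> a w + Phi \<beta> \<gamma> b w)"
  by (simp add: Phi_def sig_add distrib_left)

lemma Phi_one: "Phi \<beta> \<gamma> (\<lambda>w. if w = [] then 1 else 0) = (\<lambda>w. if w = [] then 1 else 0)"
  by (auto simp: Phi_def sig_1 sig_0 intro!: ext)

lemma Phi_mono: "Phi \<beta> \<gamma> (mono w f) = mono (map swap w) (C \<beta> \<gamma> w * sig f)"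
  by (auto simp: Phi_def mono_apply sig_0 intro!: ext)



definition gp :: "rf \<Rightarrow> rf" where "gp \<gamma> = - sig (shift 2 \<gamma>)"

lemma gp_gp: "gp (gp \<gamma>) = \<gamma>"
  by (simp add: gp_def sig_uminus shift_uminus sig_shift sig_sig shift_shift)

lemma sig_gp: "sig (gp \<gamma>) = - shift 2 \<gamma>"
  by (simp add: gp_def sig_uminus sig_sig)

lemma shift_gp: "shift 2 (gp \<gamma>) = - sig \<gamma>"
  by (simp add: gp_def shift_uminus sig_shift shift_shift)

lemma gp_nz: "\<gamma> \<noteq> 0 \<Longrightarrow> gp \<gamma> \<noteq> 0"
  by (simp add: gp_def sig_eq_0 shift_eq_0)

lemma beta_sq: "\<beta> \<in> {1, -1} \<Longrightarrow> \<beta> * \<beta> = (1::rf)" by auto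
lemma sig_beta: "\<beta> \<in> {1, -1} \<Longrightarrow> sig \<beta> = \<beta>" by (auto simp: sig_1 sig_uminus)

lemma gen_inv1: fixes u S :: "'a::field" shows "u \<noteq> 0 \<Longrightarrow> S \<noteq> 0 \<Longrightarrow> u * S * (1 / ((- u) * (- S))) = 1"
  by (simp add: field_simps)
lemma gen_inv2: fixes u S :: "'a::field" shows "u \<noteq> 0 \<Longrightarrow> S \<noteq> 0 \<Longrightarrow> 1 / (u * S) * ((- u) * (- S)) = 1"
  by (simp add: field_simps)
lemma gen_inv3: fixes b x u :: "'a::field" shows "x \<noteq> 0 \<Longrightarrow> u \<noteq> 0 \<Longrightarrow> b * b = 1 \<Longrightarrow> b * u / x * (b * (- x) / (- u)) = 1"
  by (simp add: field_simps)

lemma coefT: assumes "\<beta> \<in> {1, -1}" shows "cT \<beta> * sig (cT \<beta>) = 1"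
proof -
  have "sig (cT \<beta>) = \<beta> * (- hvar) / (- (hvar + 2))"
    using assms by (simp add: cT_def sig_mult sig_divide sig_add sig_hvar sig_numeral sig_beta algebra_simps)
  hence "cT \<beta> * sig (cT \<beta>) = \<beta> * (hvar + 2) / hvar * (\<beta> * (- hvar) / (- (hvar + 2)))"
    by (simp only: cT_def)
  also have "\<dots> = 1" using beta_sq[OF assms] hvar_ne by (intro gen_inv3) auto
  finally show ?thesis .
qed

lemma coefZp: assumes "\<gamma> \<noteq> 0" shows "cM \<gamma> * sig (cP (gp \<gamma>)) = 1"
proof -
  have "sig (hvar - 1) = - (hvar + 3)" by (simp add: sig_diff sig_hvar sig_1 algebra_simps)
  hence "sig (cP (gp \<gamma>)) = 1 / ((- (hvar + 3)) * (- shift 2 \<gamma>))"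
    by (simp add: cP_def sig_divide sig_mult sig_1 sig_gp)
  hence "cM \<gamma> * sig (cP (gp \<gamma>)) = (hvar + 3) * shift 2 \<gamma> * (1 / ((- (hvar + 3)) * (- shift 2 \<gamma>)))"
    by (simp only: cM_def)
  also have "\<dots> = 1" using assms hvar_ne by (intro gen_inv1) (auto simp: shift_eq_0)
  finally show ?thesis .
qed

lemma coefZm: assumes "\<gamma> \<noteq> 0" shows "cP \<gamma> * sig (cM (gp \<gamma>)) = 1"
proof -
  have "sig (hvar + 3) = - (hvar - 1)" by (simp add: sig_add sig_hvar sig_numeral algebra_simps)
  hence "sig (cM (gp \<gamma>)) = (- (hvar - 1)) * (- \<gamma>)"
    by (simp add: cM_def sig_mult sig_shift shift_gp sig_uminus sig_sig shift_uminus shift_shift)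
  hence "cP \<gamma> * sig (cM (gp \<gamma>)) = 1 / ((hvar - 1) * \<gamma>) * ((- (hvar - 1)) * (- \<gamma>))"
    by (simp only: cP_def)
  also have "\<dots> = 1" using assms hvar_ne by (intro gen_inv2) auto
  finally show ?thesis .
qed

lemma coef_inv: "\<beta> \<in> {1, -1} \<Longrightarrow> \<gamma> \<noteq> 0 \<Longrightarrow> coef \<beta> \<gamma> (swap g) * sig (coef \<beta> (gp \<gamma>) g) = 1"
  by (cases g) (simp_all add: coefT coefZp coefZm)

lemma C_inv: "\<beta> \<in> {1, -1} \<Longrightarrow> \<gamma> \<noteq> 0 \<Longrightarrow> C \<beta> \<gamma> (map swap v) * sig (C \<beta> (gp \<gamma>) v) = 1"
proof (induct v)
  case Nil thus ?case by (simp add: sig_1)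
next
  case (Cons g w)
  have a: "C \<beta> \<gamma> (map swap (g # w)) = shift (wt w) (coef \<beta> \<gamma> (swap g)) * C \<beta> \<gamma> (map swap w)" by simp
  have b: "sig (C \<beta> (gp \<gamma>) (g # w)) = shift (wt w) (sig (coef \<beta> (gp \<gamma>) g)) * sig (C \<beta> (gp \<gamma>) w)"
    by (simp add: sig_mult sig_shift)
  have "C \<beta> \<gamma> (map swap (g # w)) * sig (C \<beta> (gp \<gamma>) (g # w))
      = shift (wt w) (coef \<beta> \<gamma> (swap g) * sig (coef \<beta> (gp \<gamma>) g)) * (C \<beta> \<gamma> (map swap w) * sig (C \<beta> (gp \<gamma>) w))"
    unfolding a b shift_mult by (simp only: mult_ac)
  also have "\<dots> = 1" using Cons coef_inv[OF Cons.prems] by (simp add: shift_1)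
  finally show ?case .
qed

lemma Phi_Phi: "\<beta> \<in> {1, -1} \<Longrightarrow> \<gamma> \<noteq> 0 \<Longrightarrow> Phi \<beta> \<gamma> (Phi \<beta> (gp \<gamma>) a) = a"
proof
  fix v assume b: "\<beta> \<in> {1, -1}" and g: "\<gamma> \<noteq> 0"
  have "Phi \<beta> \<gamma> (Phi \<beta> (gp \<gamma>) a) v = (C \<beta> \<gamma> (map swap v) * sig (C \<beta> (gp \<gamma>) v)) * a v"
    by (simp add: Phi_def sig_mult sig_sig mult_ac)
  thus "Phi \<beta> \<gamma> (Phi \<beta> (gp \<gamma>) a) v = a v" using C_inv[OF b g] by simp
qed

lemma Phi_Phi': "\<beta> \<in> {1, -1} \<Longrightarrow> \<gamma> \<noteq> 0 \<Longrightarrow> Phi \<beta> (gp \<gamma>) (Phi \<beta> \<gamma> a) = a"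
  using Phi_Phi[of \<beta> "gp \<gamma>" a] gp_gp[of \<gamma>] gp_nz[of \<gamma>] by simp



lemma map_swap_eq: "map swap v = u \<longleftrightarrow> v = map swap u"
  by (metis map_swap_swap)

lemma Ubar_beta: "\<beta> \<in> {1, -1} \<Longrightarrow> \<beta> \<in> Ubar" using Ubar_1 Ubar_uminus by auto

lemma shift_beta: "\<beta> \<in> {1, -1} \<Longrightarrow> shift k \<beta> = \<beta>" by (auto simp: shift_1 shift_uminus)

lemma Ubar_cT: "\<beta> \<in> {1, -1} \<Longrightarrow> cT \<beta> \<in> Ubar"
  unfolding cT_def divide_inverse
  by (intro Ubar_mult Ubar_beta Ubar_add Ubar_hvar Ubar_numeral Ubar_inv_hvar)

lemma Ubar_cP: "inverse \<gamma> \<in> Ubar \<Longrightarrow> cP \<gamma> \<in> Ubar"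
proof -
  assume g: "inverse \<gamma> \<in> Ubar"
  have "inverse (hvar - 1) \<in> Ubar" using Ubar_inv_lin[of "-1"] by simp
  thus ?thesis unfolding cP_def using g by (simp add: inverse_mult_distrib divide_inverse Ubar_mult)
qed

lemma Ubar_cM: "\<gamma> \<in> Ubar \<Longrightarrow> cM \<gamma> \<in> Ubar"
  unfolding cM_def by (intro Ubar_mult Ubar_add Ubar_hvar Ubar_numeral Ubar_shift)

definition good :: "rf \<Rightarrow> rf \<Rightarrow> bool" where
  "good \<beta> \<gamma> \<longleftrightarrow> \<beta> \<in> {1, -1} \<and> \<gamma> \<in> Ubar \<and> inverse \<gamma> \<in> Ubar \<and> \<gamma> \<noteq> 0"

lemma good_gp: "good \<beta> \<gamma> \<Longrightarrow> good \<beta> (gp \<gamma>)"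
  unfolding good_def gp_def
  by (auto simp: Ubar_uminus Ubar_sig Ubar_shift sig_inverse[symmetric] shift_inverse[symmetric]
      sig_eq_0 shift_eq_0 sig_uminus[symmetric])

lemma Ubar_coef: "good \<beta> \<gamma> \<Longrightarrow> coef \<beta> \<gamma> g \<in> Ubar"
  by (cases g) (auto simp: good_def Ubar_cT Ubar_cP Ubar_cM)

lemma Ubar_C: "good \<beta> \<gamma> \<Longrightarrow> C \<beta> \<gamma> w \<in> Ubar"
  by (induct w) (auto simp: Ubar_1 Ubar_coef Ubar_mult Ubar_shift)

lemma Phi_carrier: assumes g: "good \<beta> \<gamma>" and a: "a \<in> carrier FA" shows "Phi \<beta> \<gamma> a \<in> carrier FA"
proof -
  have "{v. Phi \<beta> \<gamma> a v \<noteq> 0} \<subseteq> map swap ` {w. a w \<noteq> 0}"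
  proof
    fix v assume "v \<in> {v. Phi \<beta> \<gamma> a v \<noteq> 0}"
    hence "a (map swap v) \<noteq> 0" by (auto simp: Phi_def sig_0)
    thus "v \<in> map swap ` {w. a w \<noteq> 0}" by (intro image_eqI[of _ _ "map swap v"]) auto
  qed
  moreover have "finite {w. a w \<noteq> 0}" using a by (simp add: carrier_FA)
  ultimately have "finite {v. Phi \<beta> \<gamma> a v \<noteq> 0}" by (rule finite_subset[OF _ finite_imageI])
  moreover have "Phi \<beta> \<gamma> a v \<in> Ubar" for v
    using a g by (auto simp: Phi_def carrier_FA intro!: Ubar_mult Ubar_C Ubar_sig)
  ultimately show ?thesis by (simp add: carrier_FA)
qed



lemma hvar_m2: "hvar - 2 \<noteq> 0" using hvar_plus_int_nz[of "-2"] by simp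

lemma gen_r1: fixes m b x u :: "'a::field" shows "x \<noteq> 0 \<Longrightarrow> u \<noteq> 0 \<Longrightarrow> m * (b * u / x) * (- ((- x) / (- u))) = - b * m"
  by (simp add: field_simps)
lemma gen_r2: fixes u S w :: "'a::field" shows "u \<noteq> 0 \<Longrightarrow> S \<noteq> 0 \<Longrightarrow> 1 / (u * S) * (w * S) = w / u"
  by (simp add: field_simps)

lemma gen_r3: fixes X u x :: "'a::field" shows "u * X / x = (- X) * (- u / x)"
  by (simp add: divide_inverse mult_ac)

lemma gen_r4: fixes b u x :: "'a::field" shows "x \<noteq> 0 \<Longrightarrow> u \<noteq> 0 \<Longrightarrow> b * b = 1 \<Longrightarrow>
   (b * u / x) * (b * u / x) * (1 / (- u)) = 1 / x * (- u / x)"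
proof -
  assume a: "x \<noteq> 0" "u \<noteq> 0" "b * b = 1"
  have "(b * u / x) * (b * u / x) * (1 / (- u)) = (b * b) * (- u / (x * x))" using a by (simp add: field_simps)
  thus ?thesis using a by (simp add: field_simps)
qed

lemma gen_r5: fixes x u v w g :: "'a::field" shows "x \<noteq> 0 \<Longrightarrow> u \<noteq> 0 \<Longrightarrow> w \<noteq> 0 \<Longrightarrow> g \<noteq> 0 \<Longrightarrow>
   (u * g) * (1 / (w * g)) * (- ((- v) * (- w) / ((- u) * (- x)))) = - v / x"
  by (simp add: field_simps)

lemma Phi_rel1: assumes b: "\<beta> \<in> {1, -1}" shows "Phi \<beta> \<gamma> rel1 = (\<lambda>w. rel3 w * (- \<beta> * cP \<gamma>))"
proof
  fix v
  show "Phi \<beta> \<gamma> rel1 v = rel3 v * (- \<beta> * cP \<gamma>)"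
  proof (cases "v = [Zm, T] \<or> v = [T, Zm]")
    case False
    thus ?thesis by (auto simp: Phi_def rel1_def rel3_def mono_apply map_swap_eq sig_0)
  next
    case True
    then consider "v = [Zm, T]" | "v = [T, Zm]" by blast
    thus ?thesis
    proof cases
      case 1
      have "Phi \<beta> \<gamma> rel1 v = cP \<gamma> * cT \<beta>" using 1 by (simp add: Phi_def rel1_def mono_apply sig_1)
      also have "\<dots> = rel3 v * (- \<beta> * cP \<gamma>)"
        using 1 hvar_ne by (simp add: rel3_def mono_apply cT_def)
      finally show ?thesis .
    next
      case 2
      have "Phi \<beta> \<gamma> rel1 v = shift (-2) (cT \<beta>) * cP \<gamma> * sig (- ((hvar + 4) / (hvar + 2)))"
        using 2 by (simp add: Phi_def rel1_def mono_apply)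
      also have "\<dots> = - \<beta> * cP \<gamma>"
        using hvar_ne hvar_m2 b
        by (simp add: cT_def shift_simps sig_simps shift_beta field_simps)
      also have "\<dots> = rel3 v * (- \<beta> * cP \<gamma>)" using 2 by (simp add: rel3_def mono_apply)
      finally show ?thesis .
    qed
  qed
qed

lemma Phi_rel3: assumes b: "\<beta> \<in> {1, -1}" shows "Phi \<beta> \<gamma> rel3 = (\<lambda>w. rel1 w * (- \<beta> * cM \<gamma>))"
proof
  fix v
  show "Phi \<beta> \<gamma> rel3 v = rel1 v * (- \<beta> * cM \<gamma>)"
  proof (cases "v = [T, Zp] \<or> v = [Zp, T]")
    case False
    thus ?thesis by (auto simp: Phi_def rel1_def rel3_def mono_apply map_swap_eq sig_0)
  next
    case True
    then consider "v = [T, Zp]" | "v = [Zp, T]" by blast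
    thus ?thesis
    proof cases
      case 1
      have "Phi \<beta> \<gamma> rel3 v = shift 2 (cT \<beta>) * cM \<gamma>" using 1 by (simp add: Phi_def rel3_def mono_apply sig_1)
      also have "\<dots> = rel1 v * (- \<beta> * cM \<gamma>)"
        using 1 hvar_ne b by (simp add: rel1_def mono_apply cT_def shift_simps shift_beta field_simps)
      finally show ?thesis .
    next
      case 2
      have "Phi \<beta> \<gamma> rel3 v = cM \<gamma> * cT \<beta> * sig (- ((hvar + 2) / hvar))"
        using 2 by (simp add: Phi_def rel3_def mono_apply)
      also have "\<dots> = cM \<gamma> * (\<beta> * (hvar + 2) / hvar) * (- ((- hvar) / (- (hvar + 2))))"
        by (simp add: cT_def sig_simps)
      also have "\<dots> = - \<beta> * cM \<gamma>"
        using hvar_ne by (intro gen_r1) auto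
      also have "\<dots> = rel1 v * (- \<beta> * cM \<gamma>)" using 2 by (simp add: rel1_def mono_apply)
      finally show ?thesis .
    qed
  qed
qed

lemma Phi_rel2: assumes b: "\<beta> \<in> {1, -1}" and g: "\<gamma> \<noteq> 0"
  shows "Phi \<beta> \<gamma> rel2 = (\<lambda>w. rel2 w * (- (hvar + 2) / hvar))"
proof
  fix v
  have S: "shift 2 \<gamma> \<noteq> 0" using g by (simp add: shift_eq_0)
  show "Phi \<beta> \<gamma> rel2 v = rel2 v * (- (hvar + 2) / hvar)"
  proof (cases "v = [Zm, Zp] \<or> v = [] \<or> v = [T, T] \<or> v = [Zp, Zm]")
    case False
    thus ?thesis by (auto simp: Phi_def rel2_eq mono_apply map_swap_eq sig_0)
  next
    case True
    then consider "v = [Zm, Zp]" | "v = []" | "v = [T, T]" | "v = [Zp, Zm]" by blast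
    thus ?thesis
    proof cases
      case 1
      have "Phi \<beta> \<gamma> rel2 v = shift 2 (cP \<gamma>) * cM \<gamma>" using 1 by (simp add: Phi_def rel2_eq mono_apply sig_1)
      also have "\<dots> = 1 / ((hvar + 1) * shift 2 \<gamma>) * ((hvar + 3) * shift 2 \<gamma>)"
        by (simp add: cP_def cM_def shift_simps algebra_simps)
      also have "\<dots> = (hvar + 3) / (hvar + 1)"
        using hvar_ne S by (intro gen_r2) auto
      also have "\<dots> = (hvar + 2) * (hvar * (hvar + 3) / ((hvar + 1) * (hvar + 2))) / hvar"
        using gen_alg3[of hvar "hvar + 1" "hvar + 2"] hvar_ne by simp
      also have "\<dots> = rel2 v * (- (hvar + 2) / hvar)"
      proof -
        have r: "rel2 v = - c2" using 1 by (simp add: rel2_eq mono_apply)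
        show ?thesis unfolding r c2_def by (rule gen_r3)
      qed
      finally show ?thesis .
    next
      case 2
      thus ?thesis using hvar_ne by (simp add: Phi_def rel2_eq mono_apply sig_simps field_simps)
    next
      case 3
      have "Phi \<beta> \<gamma> rel2 v = cT \<beta> * cT \<beta> * sig (1 / hvar)" using 3 by (simp add: Phi_def rel2_eq mono_apply)
      also have "\<dots> = (\<beta> * (hvar + 2) / hvar) * (\<beta> * (hvar + 2) / hvar) * (1 / (- (hvar + 2)))"
        by (simp add: cT_def sig_simps)
      also have "\<dots> = 1 / hvar * (- (hvar + 2) / hvar)"
        using hvar_ne beta_sq[OF b] by (intro gen_r4) auto
      also have "\<dots> = rel2 v * (- (hvar + 2) / hvar)" using 3 by (simp add: rel2_eq mono_apply)
      finally show ?thesis .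
    next
      case 4
      have "Phi \<beta> \<gamma> rel2 v = shift (-2) (cM \<gamma>) * cP \<gamma> * sig (- c2)" using 4 by (simp add: Phi_def rel2_eq mono_apply)
      also have "\<dots> = ((hvar + 1) * \<gamma>) * (1 / ((hvar - 1) * \<gamma>)) * (- ((- (hvar + 2)) * (- (hvar - 1)) / ((- (hvar + 1)) * (- hvar))))"
      proof -
        have "shift (-2) (cM \<gamma>) = (hvar + 1) * \<gamma>" by (simp add: cM_def shift_simps algebra_simps)
        moreover have "sig (- c2) = - ((- (hvar + 2)) * (- (hvar - 1)) / ((- (hvar + 1)) * (- hvar)))"
          by (simp add: c2_def sig_simps algebra_simps)
        ultimately show ?thesis by (simp add: cP_def)
      qed
      also have "\<dots> = - (hvar + 2) / hvar" using hvar_ne g by (intro gen_r5) auto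
      also have "\<dots> = rel2 v * (- (hvar + 2) / hvar)" using 4 by (simp add: rel2_eq mono_apply)
      finally show ?thesis .
    qed
  qed
qed



lemma DR_subg: "additive_subgroup DRideal FA" by (rule ideal.axioms(1)[OF ideal_DR])

lemma DR_add: "a \<in> DRideal \<Longrightarrow> b \<in> DRideal \<Longrightarrow> (\<lambda>w. a w + b w) \<in> DRideal"
  using additive_subgroup.a_closed[OF DR_subg, of a b] by (simp add: add_FA)

lemma DR_zero: "(\<lambda>w. 0) \<in> DRideal"
  using additive_subgroup.zero_closed[OF DR_subg] by (simp add: zero_FA)

lemma DR_carrier: "a \<in> DRideal \<Longrightarrow> a \<in> carrier FA"
  using ideal.Icarr[OF ideal_DR] by blast

lemma DR_neg: "a \<in> DRideal \<Longrightarrow> (\<lambda>w. - a w) \<in> DRideal"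
  using additive_subgroup.a_inv_closed[OF DR_subg, of a] FA_minus[OF DR_carrier] by simp

lemma Phi_neg: "Phi \<beta> \<gamma> (\<lambda>w. - a w) = (\<lambda>w. - Phi \<beta> \<gamma> a w)"
  by (simp add: Phi_def sig_uminus)

lemma Phi_DR: assumes g: "good \<beta> \<gamma>" shows "a \<in> DRideal \<Longrightarrow> Phi \<beta> \<gamma> a \<in> DRideal"
proof -
  have b: "\<beta> \<in> {1, -1}" and gz: "\<gamma> \<noteq> 0" using g by (auto simp: good_def)
  define Kp where "Kp = {a \<in> carrier FA. Phi \<beta> \<gamma> a \<in> DRideal}"
  have "ideal Kp FA"
  proof (rule idealI[OF ring_FA])
    show "subgroup Kp (add_monoid FA)"
    proof
      show "Kp \<subseteq> carrier (add_monoid FA)" by (auto simp: Kp_def)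
    next
      fix x y assume "x \<in> Kp" "y \<in> Kp"
      thus "x \<otimes>\<^bsub>add_monoid FA\<^esub> y \<in> Kp"
        using ring.ring_simprules(1)[OF ring_FA, of x y]
        by (auto simp: Kp_def add_FA Phi_add DR_add)
    next
      show "\<one>\<^bsub>add_monoid FA\<^esub> \<in> Kp"
        using ring.ring_simprules(2)[OF ring_FA] by (simp add: Kp_def zero_FA Phi_def sig_0 DR_zero)
    next
      fix x assume x: "x \<in> Kp"
      hence xc: "x \<in> carrier FA" by (simp add: Kp_def)
      have "inv\<^bsub>add_monoid FA\<^esub> x = (\<lambda>w. - x w)" using FA_minus[OF xc] by (simp add: a_inv_def)
      moreover have "(\<lambda>w. - x w) \<in> carrier FA" using xc by (simp add: carrier_FA Ubar_uminus)
      ultimately show "inv\<^bsub>add_monoid FA\<^esub> x \<in> Kp" using x by (simp add: Kp_def Phi_neg DR_neg)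
    qed
  next
    fix a x assume a: "a \<in> Kp" and x: "x \<in> carrier FA"
    have ac: "a \<in> carrier FA" using a by (simp add: Kp_def)
    show "x \<otimes>\<^bsub>FA\<^esub> a \<in> Kp"
      using a x ac ideal.I_l_closed[OF ideal_DR, of "Phi \<beta> \<gamma> a" "Phi \<beta> \<gamma> x"] Phi_carrier[OF g x]
      by (simp add: Kp_def mult_FA Phi_mult fmult_carrier)
    show "a \<otimes>\<^bsub>FA\<^esub> x \<in> Kp"
      using a x ac ideal.I_r_closed[OF ideal_DR, of "Phi \<beta> \<gamma> a" "Phi \<beta> \<gamma> x"] Phi_carrier[OF g x]
      by (simp add: Kp_def mult_FA Phi_mult fmult_carrier)
  qed
  moreover have "rels \<subseteq> Kp"
  proof -
    have k1: "- \<beta> * cP \<gamma> \<in> Ubar" and k3: "- \<beta> * cM \<gamma> \<in> Ubar"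
      using g by (auto simp: good_def Ubar_beta Ubar_cP Ubar_cM intro!: Ubar_mult Ubar_uminus)
    have k2: "- (hvar + 2) / hvar \<in> Ubar"
      by (simp only: divide_inverse) (intro Ubar_mult Ubar_uminus Ubar_add Ubar_hvar Ubar_numeral Ubar_inv_hvar)
    have "Phi \<beta> \<gamma> rel1 \<in> DRideal" unfolding Phi_rel1[OF b]
      by (rule DR_rmult[OF _ k1]) (simp add: rel_in_DR rels_eq)
    moreover have "Phi \<beta> \<gamma> rel2 \<in> DRideal" unfolding Phi_rel2[OF b gz]
      by (rule DR_rmult[OF _ k2]) (simp add: rel_in_DR rels_eq)
    moreover have "Phi \<beta> \<gamma> rel3 \<in> DRideal" unfolding Phi_rel3[OF b]
      by (rule DR_rmult[OF _ k3]) (simp add: rel_in_DR rels_eq)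
    ultimately show ?thesis
      by (simp add: Kp_def rels_eq rel1_carrier rel2_carrier rel3_carrier)
  qed
  ultimately have "DRideal \<subseteq> Kp" unfolding DRideal_def by (rule ring.genideal_minimal[OF ring_FA])
  thus "a \<in> DRideal \<Longrightarrow> Phi \<beta> \<gamma> a \<in> DRideal" by (auto simp: Kp_def)
qed

definition phiD :: "rf \<Rightarrow> rf \<Rightarrow> (gen list \<Rightarrow> rf) set \<Rightarrow> (gen list \<Rightarrow> rf) set" where
  "phiD \<beta> \<gamma> X = (\<Union>y\<in>X. cls (Phi \<beta> \<gamma> y))"

lemma self_cls: "x \<in> carrier FA \<Longrightarrow> x \<in> cls x"
  unfolding cls_def a_r_coset_def' using DR_zero
  by (auto simp: add_FA intro!: bexI[of _ "\<lambda>w. 0"])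

lemma phiD_cls: assumes g: "good \<beta> \<gamma>" and x: "x \<in> carrier FA" shows "phiD \<beta> \<gamma> (cls x) = cls (Phi \<beta> \<gamma> x)"
proof -
  have "cls (Phi \<beta> \<gamma> y) = cls (Phi \<beta> \<gamma> x)" if y: "y \<in> cls x" for y
  proof -
    obtain i where i: "i \<in> DRideal" and yi: "y = i \<oplus>\<^bsub>FA\<^esub> x"
      using y unfolding cls_def a_r_coset_def' by auto
    have ic: "i \<in> carrier FA" using DR_carrier[OF i] .
    have "Phi \<beta> \<gamma> y = (\<lambda>w. Phi \<beta> \<gamma> i w + Phi \<beta> \<gamma> x w)" using yi by (simp add: add_FA Phi_add)
    moreover have "Phi \<beta> \<gamma> i \<in> DRideal" by (rule Phi_DR[OF g i])
    moreover have "Phi \<beta> \<gamma> x \<in> carrier FA" by (rule Phi_carrier[OF g x])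
    ultimately show ?thesis
      using ring.ring_simprules(1)[OF ring_FA, of "Phi \<beta> \<gamma> i" "Phi \<beta> \<gamma> x"] DR_carrier
      by (intro cls_eqI) (auto simp: add_FA)
  qed
  thus ?thesis unfolding phiD_def using self_cls[OF x] by blast
qed

lemma carrier_DR: "X \<in> carrier DR \<Longrightarrow> \<exists>x\<in>carrier FA. X = cls x"
  by (auto simp: DR_def FactRing_def A_RCOSETS_def' cls_def)

lemma one_DR: "\<one>\<^bsub>DR\<^esub> = cls (\<lambda>w. if w = [] then 1 else 0)"
  by (simp add: DR_def FactRing_def cls_def one_FA)

lemma phiD_carrier: assumes g: "good \<beta> \<gamma>" shows "X \<in> carrier DR \<Longrightarrow> phiD \<beta> \<gamma> X \<in> carrier DR"
proof -
  assume "X \<in> carrier DR"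
  then obtain x where x: "x \<in> carrier FA" "X = cls x" using carrier_DR by blast
  thus "phiD \<beta> \<gamma> X \<in> carrier DR" by (simp add: phiD_cls[OF g] cls_carrier Phi_carrier[OF g])
qed

lemma phiD_iso: assumes g: "good \<beta> \<gamma>" shows "phiD \<beta> \<gamma> \<in> ring_iso DR DR"
proof (rule ring_iso_memI)
  fix X assume "X \<in> carrier DR"
  then obtain x where x: "x \<in> carrier FA" "X = cls x" using carrier_DR by blast
  thus "phiD \<beta> \<gamma> X \<in> carrier DR" by (simp add: phiD_cls[OF g] cls_carrier Phi_carrier[OF g])
next
  fix X Y assume "X \<in> carrier DR" "Y \<in> carrier DR"
  then obtain x y where x: "x \<in> carrier FA" "X = cls x" and y: "y \<in> carrier FA" "Y = cls y"
    using carrier_DR by metis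
  show "phiD \<beta> \<gamma> (X \<otimes>\<^bsub>DR\<^esub> Y) = phiD \<beta> \<gamma> X \<otimes>\<^bsub>DR\<^esub> phiD \<beta> \<gamma> Y"
    using x y by (simp add: cls_mult phiD_cls[OF g] fmult_carrier Phi_carrier[OF g] Phi_mult)
  show "phiD \<beta> \<gamma> (X \<oplus>\<^bsub>DR\<^esub> Y) = phiD \<beta> \<gamma> X \<oplus>\<^bsub>DR\<^esub> phiD \<beta> \<gamma> Y"
    using x y ring.ring_simprules(1)[OF ring_FA, of x y]
    by (simp add: cls_add phiD_cls[OF g] Phi_carrier[OF g] Phi_add add_FA)
next
  show "phiD \<beta> \<gamma> \<one>\<^bsub>DR\<^esub> = \<one>\<^bsub>DR\<^esub>"
    using ring.ring_simprules(6)[OF ring_FA] by (simp add: one_DR phiD_cls[OF g] Phi_one one_FA)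
next
  have g': "good \<beta> (gp \<gamma>)" by (rule good_gp[OF g])
  have b: "\<beta> \<in> {1, -1}" and gz: "\<gamma> \<noteq> 0" using g by (auto simp: good_def)
  show "bij_betw (phiD \<beta> \<gamma>) (carrier DR) (carrier DR)"
  proof (rule bij_betwI[where g = "phiD \<beta> (gp \<gamma>)"])
    show "phiD \<beta> \<gamma> \<in> carrier DR \<rightarrow> carrier DR" "phiD \<beta> (gp \<gamma>) \<in> carrier DR \<rightarrow> carrier DR"
      using phiD_carrier[OF g] phiD_carrier[OF g'] by auto
  next
    fix X assume "X \<in> carrier DR"
    then obtain x where x: "x \<in> carrier FA" "X = cls x" using carrier_DR by blast
    thus "phiD \<beta> (gp \<gamma>) (phiD \<beta> \<gamma> X) = X"
      by (simp add: phiD_cls[OF g] phiD_cls[OF g'] Phi_carrier[OF g] Phi_Phi'[OF b gz])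
  next
    fix X assume "X \<in> carrier DR"
    then obtain x where x: "x \<in> carrier FA" "X = cls x" using carrier_DR by blast
    thus "phiD \<beta> \<gamma> (phiD \<beta> (gp \<gamma>) X) = X"
      by (simp add: phiD_cls[OF g] phiD_cls[OF g'] Phi_carrier[OF g'] Phi_Phi[OF b gz])
  qed
qed



theorem lemma6p1:
  shows "(\<forall>\<phi> f1 f2 f3 f4. f1 \<in> Ubar \<and> f2 \<in> Ubar \<and> f3 \<in> Ubar \<and> f4 \<in> Ubar \<and>
            DR_alg_aut \<phi> \<and>
            \<phi> (cls (mono [] hvar)) = cls (mono [] f1) \<and>
            \<phi> (cls (mono [T] 1)) = cls (mono [T] f2) \<and>
            \<phi> (cls (mono [Zp] 1)) = cls (mono [Zm] f3) \<and>
            \<phi> (cls (mono [Zm] 1)) = cls (mono [Zp] f4)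
          \<longrightarrow> (\<exists>\<beta> \<gamma>. \<beta> \<in> {1, -1} \<and> \<gamma> \<noteq> 0 \<and>
                 f1 = - hvar - 2 \<and>
                 f2 = \<beta> * (hvar + 2) / hvar \<and>
                 f3 = 1 / ((hvar - 1) * \<gamma>) \<and>
                 f4 = (hvar + 3) * shift 2 \<gamma>))
       \<and> (\<forall>\<beta> \<gamma>. \<beta> \<in> {1, -1} \<and> \<gamma> \<in> Ubar \<and> inverse \<gamma> \<in> Ubar \<and> \<gamma> \<noteq> 0
          \<longrightarrow> (\<exists>\<phi>. DR_alg_aut \<phi> \<and>
                 \<phi> (cls (mono [] hvar)) = cls (mono [] (- hvar - 2)) \<and>
                 \<phi> (cls (mono [T] 1)) = cls (mono [T] (\<beta> * (hvar + 2) / hvar)) \<and>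
                 \<phi> (cls (mono [Zp] 1)) = cls (mono [Zm] (1 / ((hvar - 1) * \<gamma>))) \<and>
                 \<phi> (cls (mono [Zm] 1)) = cls (mono [Zp] ((hvar + 3) * shift 2 \<gamma>))))"
proof (intro conjI allI impI)
  fix \<phi> f1 f2 f3 f4
  assume a: "f1 \<in> Ubar \<and> f2 \<in> Ubar \<and> f3 \<in> Ubar \<and> f4 \<in> Ubar \<and>
            DR_alg_aut \<phi> \<and>
            \<phi> (cls (mono [] hvar)) = cls (mono [] f1) \<and>
            \<phi> (cls (mono [T] 1)) = cls (mono [T] f2) \<and>
            \<phi> (cls (mono [Zp] 1)) = cls (mono [Zm] f3) \<and>
            \<phi> (cls (mono [Zm] 1)) = cls (mono [Zp] f4)"
  hence iso: "\<phi> \<in> ring_iso DR DR" and cst: "\<forall>c. \<phi> (M [] (cst c)) = M [] (cst c)"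
    by (auto simp: DR_alg_aut_def)
  have hom: "\<phi> \<in> ring_hom DR DR" using iso by (simp add: ring_iso_def)
  have inj: "inj_on \<phi> (carrier DR)" using iso by (simp add: ring_iso_def bij_betw_def)
  show "\<exists>\<beta> \<gamma>. \<beta> \<in> {1, -1} \<and> \<gamma> \<noteq> 0 \<and>
                 f1 = - hvar - 2 \<and>
                 f2 = \<beta> * (hvar + 2) / hvar \<and>
                 f3 = 1 / ((hvar - 1) * \<gamma>) \<and>
                 f4 = (hvar + 3) * shift 2 \<gamma>"
    using a by (intro forward[OF _ _ _ _ hom inj cst]) auto
next
  fix \<beta> \<gamma> :: rf
  assume "\<beta> \<in> {1, -1} \<and> \<gamma> \<in> Ubar \<and> inverse \<gamma> \<in> Ubar \<and> \<gamma> \<noteq> 0"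
  hence g: "good \<beta> \<gamma>" by (simp add: good_def)
  let ?\<phi> = "phiD \<beta> \<gamma>"
  have mc: "mono w f \<in> carrier FA" if "f \<in> Ubar" for w f using mono_carrier[OF that] .
  have pm: "?\<phi> (cls (mono w f)) = cls (mono (map swap w) (C \<beta> \<gamma> w * sig f))" if "f \<in> Ubar" for w f
    using phiD_cls[OF g mc[OF that]] by (simp add: Phi_mono)
  have "DR_alg_aut ?\<phi>"
    unfolding DR_alg_aut_def using phiD_iso[OF g] pm[OF Ubar_cst] by (simp add: sig_cst)
  moreover have "?\<phi> (cls (mono [] hvar)) = cls (mono [] (- hvar - 2))"
    using pm[OF Ubar_hvar, of "[]"] by (simp add: sig_hvar)
  moreover have "?\<phi> (cls (mono [T] 1)) = cls (mono [T] (\<beta> * (hvar + 2) / hvar))"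
    using pm[OF Ubar_1, of "[T]"] by (simp add: sig_1 cT_def)
  moreover have "?\<phi> (cls (mono [Zp] 1)) = cls (mono [Zm] (1 / ((hvar - 1) * \<gamma>)))"
    using pm[OF Ubar_1, of "[Zp]"] by (simp add: sig_1 cP_def)
  moreover have "?\<phi> (cls (mono [Zm] 1)) = cls (mono [Zp] ((hvar + 3) * shift 2 \<gamma>))"
    using pm[OF Ubar_1, of "[Zm]"] by (simp add: sig_1 cM_def)
  ultimately show "\<exists>\<phi>. DR_alg_aut \<phi> \<and>
                 \<phi> (cls (mono [] hvar)) = cls (mono [] (- hvar - 2)) \<and>
                 \<phi> (cls (mono [T] 1)) = cls (mono [T] (\<beta> * (hvar + 2) / hvar)) \<and>
                 \<phi> (cls (mono [Zp] 1)) = cls (mono [Zm] (1 / ((hvar - 1) * \<gamma>))) \<and>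
                 \<phi> (cls (mono [Zm] 1)) = cls (mono [Zp] ((hvar + 3) * shift 2 \<gamma>))"
    by blast
qed


end
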